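(* Let $1\le k\le n$, let $r$ be a real symmetric $n\times n$ matrix with eigenvalues $r_1,\dots,r_n$, let $x\in\mathbb R^n$ and $r_{00}\in\mathbb R$. Then the degree-$(k+1)$ polynomial $$p_{k+1}(t)=(r_{00}+t)\,\sigma_k(r+tI)-x\,T_{k-1}(r+tI)\,x^T$$ has only real roots. Moreover, if $\alpha_1\le\cdots\le\alpha_{k+1}$ are its roots and $\beta_1\le\cdots\le\beta_k$ are the (real) roots of $\sigma_k(r+tI)$, then they interlace: $\alpha_1\le\beta_1\le\alpha_2\le\beta_2\le\cdots\le\beta_k\le\alpha_{k+1}$. Furthermore $\alpha_i\in[\min_{1\le j\le n}(-r_j),\ \max_{1\le j\le n}(-r_j)]$ for $2\le i\le k-1$.
   Context: For a real symmetric $n\times n$ matrix $s$, $\sigma_j(s)$ denotes the $j$-th elementary symmetric function of its eigenvalues ($\sigma_0=1$) and $T_j(s)=\sum_{i=0}^{j}(-1)^i\sigma_{j-i}(s)s^i$ is the Newton transformation. *)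

theory Defs
  imports "Jordan_Normal_Form.Jordan_Normal_Form"
begin

definition esym :: "nat \<Rightarrow> real list \<Rightarrow> real" where
  "esym j xs = (\<Sum>S | S \<subseteq> {..<length xs} \<and> card S = j. \<Prod>i\<in>S. xs ! i)"

(* the eigenvalues of a (real symmetric, hence real-diagonalisable) square matrix, listed
   with algebraic multiplicity: a list es with char_poly s = prod (X - e) *)
definition eigvals :: "real mat \<Rightarrow> real list" where
  "eigvals s = (SOME es. char_poly s = (\<Prod>e\<leftarrow>es. [:- e, 1:]))"

definition sigma :: "nat \<Rightarrow> real mat \<Rightarrow> real" where
  "sigma j s = esym j (eigvals s)"

definition newton_T :: "nat \<Rightarrow> real mat \<Rightarrow> real mat" where
  "newton_T j s = foldr (\<lambda>i acc. ((-1) ^ i * sigma (j - i) s) \<cdot>\<^sub>m (s ^\<^sub>m i) + acc)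
                     [0..<Suc j] (0\<^sub>m (dim_row s) (dim_row s))"

definition p_poly :: "nat \<Rightarrow> real mat \<Rightarrow> real \<Rightarrow> real vec \<Rightarrow> real \<Rightarrow> real" where
  "p_poly k r r00 x t =
     (let s = r + t \<cdot>\<^sub>m 1\<^sub>m (dim_row r)
      in (r00 + t) * sigma k s - x \<bullet> (newton_T (k - 1) s *\<^sub>v x))"

end

theory Submission
  imports Defs "Jordan_Normal_Form.Schur_Decomposition"
begin



definition rr :: "real poly \<Rightarrow> bool" where
  "rr p \<longleftrightarrow> p \<noteq> 0 \<and> size (proots p) = degree p"

definition Nle :: "real poly \<Rightarrow> real \<Rightarrow> nat" where
  "Nle p y = size (filter_mset (\<lambda>a. a \<le> y) (proots p))"
definition Nlt :: "real poly \<Rightarrow> real \<Rightarrow> nat" where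
  "Nlt p y = size (filter_mset (\<lambda>a. a < y) (proots p))"
definition Ngt :: "real poly \<Rightarrow> real \<Rightarrow> nat" where
  "Ngt p y = size (filter_mset (\<lambda>a. y < a) (proots p))"

definition intl :: "real poly \<Rightarrow> real poly \<Rightarrow> bool" where
  "intl h g \<longleftrightarrow> rr h \<and> rr g \<and> degree h = Suc (degree g) \<and>
     (\<forall>y. Nle g y \<le> Nle h y \<and> Nle h y \<le> Suc (Nle g y) \<and> Nlt g y \<le> Nlt h y \<and> Nlt h y \<le> Suc (Nlt g y))"

definition cone :: "real poly \<Rightarrow> real poly \<Rightarrow> bool" where
  "cone g h \<longleftrightarrow> (\<forall>c. poly g c = 0 \<longrightarrow>
     (\<exists>q. h = [:-c,1:]^(Polynomial.order c g - 1) * q \<and> (-1)^(Ngt g c) * poly q c \<le> 0))"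

declare mult_pCons_left[simp del]

lemma rr_factor:
  assumes "rr p" shows "p = Polynomial.smult (lead_coeff p) (\<Prod>a\<in>#proots p. [:-a,1:])"
  using assms
proof (induction "degree p" arbitrary: p rule: less_induct)
  case (less p)
  have p0: "p \<noteq> 0" and sz: "size (proots p) = degree p" using less.prems by (auto simp: rr_def)
  show ?case
  proof (cases "degree p = 0")
    case True
    then have "proots p = {#}" using sz by auto
    then show ?thesis using True by (auto elim: degree_eq_zeroE)
  next
    case False
    then obtain a where a: "a \<in># proots p" using sz by (metis size_empty multiset_nonemptyE)
    then have "poly p a = 0" using p0 by auto
    then obtain q where q: "p = [:-a,1:] * q" by (metis dvdE poly_eq_0_iff_dvd)
    have q0: "q \<noteq> 0" using p0 q by auto
    have pr: "proots p = {#a#} + proots q" using q q0 by (simp add: proots_mult del: mult_pCons_left)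
    have dq: "degree p = Suc (degree q)" using q q0 by (simp add: degree_mult_eq del: mult_pCons_left)
    have "rr q" using sz pr dq q0 by (auto simp: rr_def)
    then have IH: "q = Polynomial.smult (lead_coeff q) (\<Prod>a\<in>#proots q. [:-a,1:])" using less dq by auto
    have lc: "lead_coeff p = lead_coeff q" using q by (simp add: lead_coeff_mult del: mult_pCons_left)
    show ?thesis
      apply (subst q) apply (subst IH) using pr lc by (simp add: mult_smult_right)
  qed
qed

lemma prod_lin_nz: "(\<Prod>a\<in>#M. [:-a,1::real:]) \<noteq> 0"
  by (auto simp: prod_mset_zero_iff)

lemma proots_prod_lin: "proots (\<Prod>a\<in>#M. [:-a,1::real:]) = M"
proof (induction M)
  case (add x M)
  have "proots (\<Prod>a\<in>#add_mset x M. [:-a,1::real:]) = proots ([:-x,1:] * (\<Prod>a\<in>#M. [:-a,1::real:]))" by simp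
  also have "\<dots> = {#x#} + M" using add prod_lin_nz[of M] by (subst proots_mult) auto
  finally show ?case by simp
qed simp

lemma degree_prod_lin: "degree (\<Prod>a\<in>#M. [:-a,1::real:]) = size M"
proof (induction M)
  case (add x M)
  have "degree (\<Prod>a\<in>#add_mset x M. [:-a,1::real:]) = degree ([:-x,1:] * (\<Prod>a\<in>#M. [:-a,1::real:]))" by simp
  also have "\<dots> = Suc (size M)" using add prod_lin_nz[of M] by (subst degree_mult_eq) auto
  finally show ?case by simp
qed simp

lemma poly_prod_lin: "poly (\<Prod>a\<in>#M. [:-a,1::real:]) y = (\<Prod>a\<in>#M. y - a)"
  by (induction M) (auto simp del: mult_pCons_left)

lemma rr_of_prod:
  assumes "c \<noteq> 0" "p = Polynomial.smult c (\<Prod>a\<in>#M. [:-a,1::real:])"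
  shows "rr p" "proots p = M"
  using assms by (auto simp: rr_def proots_prod_lin degree_prod_lin prod_lin_nz)

lemma sign_prod_lin:
  assumes "y \<notin># M"
  shows "(-1::real)^(size (filter_mset (\<lambda>a. y < a) M)) * (\<Prod>a\<in>#M. y - a) > 0"
  using assms
proof (induction M)
  case empty then show ?case by simp
next
  case (add x M)
  then have IH: "(-1::real)^(size (filter_mset (\<lambda>a. y < a) M)) * (\<Prod>a\<in>#M. y - a) > 0" by auto
  have xy: "x \<noteq> y" using add by auto
  show ?case
  proof (cases "y < x")
    case True
    then have "(-1::real)^(size (filter_mset (\<lambda>a. y < a) (add_mset x M))) * (\<Prod>a\<in>#add_mset x M. y - a)
       = ((-1::real)^(size (filter_mset (\<lambda>a. y < a) M)) * (\<Prod>a\<in>#M. y - a)) * (x - y)" by (simp add: algebra_simps)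
    also have "\<dots> > 0" using IH True by simp
    finally show ?thesis .
  next
    case False
    then have "y > x" using xy by auto
    then have "(-1::real)^(size (filter_mset (\<lambda>a. y < a) (add_mset x M))) * (\<Prod>a\<in>#add_mset x M. y - a)
       = ((-1::real)^(size (filter_mset (\<lambda>a. y < a) M)) * (\<Prod>a\<in>#M. y - a)) * (y - x)" using False by simp
    also have "\<dots> > 0" using IH \<open>y > x\<close> by simp
    finally show ?thesis .
  qed
qed

lemma cnt_interlace:
  fixes u v :: "nat \<Rightarrow> real" and R :: "real \<Rightarrow> real \<Rightarrow> bool"
  assumes uv: "\<And>l. l < m \<Longrightarrow> v l < u l \<and> u l < v (Suc l)"
   and R: "\<And>a b. a < b \<Longrightarrow> R b y \<Longrightarrow> R a y"
  shows "card {l. l < m \<and> R (u l) y} \<le> card {l. l < Suc m \<and> R (v l) y}"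
    and "card {l. l < Suc m \<and> R (v l) y} \<le> Suc (card {l. l < m \<and> R (u l) y})"
proof -
  have "{l. l < m \<and> R (u l) y} \<subseteq> {l. l < Suc m \<and> R (v l) y}"
    using uv R by auto
  then show "card {l. l < m \<and> R (u l) y} \<le> card {l. l < Suc m \<and> R (v l) y}"
    by (intro card_mono) auto
  have "{l. l < Suc m \<and> R (v l) y} \<subseteq> insert 0 (Suc ` {l. l < m \<and> R (u l) y})"
  proof
    fix l assume l: "l \<in> {l. l < Suc m \<and> R (v l) y}"
    show "l \<in> insert 0 (Suc ` {l. l < m \<and> R (u l) y})"
    proof (cases l)
      case (Suc l')
      then have "l' < m" "R (v (Suc l')) y" using l by auto
      then have "R (u l') y" using uv[of l'] R by blast
      then show ?thesis using Suc \<open>l' < m\<close> by auto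
    qed auto
  qed
  then have "card {l. l < Suc m \<and> R (v l) y} \<le> card (insert 0 (Suc ` {l. l < m \<and> R (u l) y}))"
    by (intro card_mono) auto
  also have "\<dots> \<le> Suc (card (Suc ` {l. l < m \<and> R (u l) y}))" by (rule card_insert_le_m1) auto
  also have "\<dots> \<le> Suc (card {l. l < m \<and> R (u l) y})" using card_image_le[of "{l. l < m \<and> R (u l) y}" Suc] by auto
  finally show "card {l. l < Suc m \<and> R (v l) y} \<le> Suc (card {l. l < m \<and> R (u l) y})" .
qed

lemma size_filter_mset_map:
  "size (filter_mset P (mset (map f [0..<m]))) = card {l. l < m \<and> P (f l)}"
proof -
  have "size (filter_mset P (mset (map f [0..<m]))) = length (filter P (map f [0..<m]))"
    by (metis mset_filter size_mset)
  also have "\<dots> = card {i. i < m \<and> P (map f [0..<m] ! i)}" by (simp add: length_filter_conv_card)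
  also have "\<dots> = card {l. l < m \<and> P (f l)}" by (rule arg_cong[where f=card]) auto
  finally show ?thesis .
qed

lemma subset_size_eq:
  assumes "A \<subseteq># B" "size B \<le> size A" shows "A = B"
proof (rule ccontr)
  assume "A \<noteq> B"
  then have "A \<subset># B" using assms by (simp add: subset_mset.le_neq_trans)
  then have "size A < size B" by (rule mset_subset_size)
  then show False using assms by simp
qed

lemma strict_sorted_nth_less:
  assumes "sorted_wrt (<) (zs::real list)" "i < length zs" "j < length zs" "zs ! i < zs ! j"
  shows "i < j"
proof (rule ccontr)
  assume "\<not> i < j"
  then have "j \<le> i" by simp
  then have "zs ! j \<le> zs ! i"
    using assms by (metis le_less sorted_wrt_nth_less order.refl)
  then show False using assms by simp
qed

lemma size_filter_split:
  "size (filter_mset P M) + size (filter_mset (\<lambda>a. \<not> P a) M) = size M"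
  by (metis multiset_partition size_union)

lemma Nle_Ngt: "Nle p y + Ngt p y = size (proots p)"
  unfolding Nle_def Ngt_def using size_filter_split[of "\<lambda>a. a \<le> y" "proots p"]
  by (simp add: not_le)

lemma Nle_Nlt_count: "Nle p y = Nlt p y + count (proots p) y"
proof -
  have "filter_mset (\<lambda>a. a \<le> y) (proots p) = filter_mset (\<lambda>a. a < y) (proots p) + filter_mset (\<lambda>a. a = y) (proots p)"
    by (rule multiset_eqI) auto
  moreover have "size (filter_mset (\<lambda>a. a = y) M) = count M y" for M :: "real multiset"
    by (induction M) auto
  ultimately show ?thesis unfolding Nle_def Nlt_def by simp
qed

lemma deriv_intl:
  assumes rrF: "rr F" and dF: "degree F > 0"
  shows "intl F (pderiv F)"
proof -
  have F0: "F \<noteq> 0" and szF: "size (proots F) = degree F" using rrF by (auto simp: rr_def)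
  define Z where "Z = set_mset (proots F)"
  have Z: "Z = {x. poly F x = 0}" using F0 by (simp add: Z_def)
  have finZ: "finite Z" by (simp add: Z_def)
  define zs where "zs = sorted_list_of_set Z"
  define s where "s = length zs"
  have zs_strict: "sorted_wrt (<) zs" unfolding zs_def by simp
  have set_zs: "set zs = Z" using finZ by (simp add: zs_def)
  have dist_zs: "distinct zs" unfolding zs_def by simp
  have "proots F \<noteq> {#}" using szF dF by auto
  then have "Z \<noteq> {}" unfolding Z_def by auto
  then have s0: "s > 0" using set_zs unfolding s_def by auto
  have zroot: "poly F (zs ! l) = 0" if "l < s" for l
    using that set_zs Z nth_mem unfolding s_def by blast
  have "\<forall>l. \<exists>x. l < s - 1 \<longrightarrow> zs ! l < x \<and> x < zs ! Suc l \<and> poly (pderiv F) x = 0"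
  proof
    fix l
    show "\<exists>x. l < s - 1 \<longrightarrow> zs ! l < x \<and> x < zs ! Suc l \<and> poly (pderiv F) x = 0"
    proof (cases "l < s - 1")
      case True
      have lt: "zs ! l < zs ! Suc l" using zs_strict True unfolding s_def
        by (simp add: sorted_wrt_nth_less)
      from poly_MVT[OF lt, of F] obtain x where x: "zs ! l < x" "x < zs ! Suc l"
        "poly F (zs ! Suc l) - poly F (zs ! l) = (zs ! Suc l - zs ! l) * poly (pderiv F) x" by blast
      have "poly (pderiv F) x = 0" using x(3) zroot[of l] zroot[of "Suc l"] True lt by auto
      then show ?thesis using x by blast
    qed auto
  qed
  then obtain \<rho> where rho: "\<And>l. l < s - 1 \<Longrightarrow> zs ! l < \<rho> l \<and> \<rho> l < zs ! Suc l \<and> poly (pderiv F) (\<rho> l) = 0"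
    by metis
  have rho_notZ: "\<rho> l \<notin> Z" if l: "l < s - 1" for l
  proof
    assume "\<rho> l \<in> Z"
    then obtain i where i: "i < s" "zs ! i = \<rho> l" using set_zs unfolding s_def by (metis in_set_conv_nth)
    have "l < i" using strict_sorted_nth_less[OF zs_strict, of l i] rho[OF l] i l unfolding s_def by auto
    moreover have "i < Suc l" using strict_sorted_nth_less[OF zs_strict, of i "Suc l"] rho[OF l] i l unfolding s_def by auto
    ultimately show False by simp
  qed
  have rho_mono: "\<rho> l < \<rho> l'" if "l < l'" "l' < s - 1" for l l'
  proof -
    have "\<rho> l < zs ! Suc l" using rho[of l] that by auto
    also have "zs ! Suc l \<le> zs ! l'"
    proof (cases "Suc l = l'")
      case False
      then have "Suc l < l'" using that by simp
      then show ?thesis using that zs_strict unfolding s_def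
        using sorted_wrt_nth_less[OF zs_strict, of "Suc l" l'] by fastforce
    qed simp
    also have "\<dots> < \<rho> l'" using rho[of l'] that by auto
    finally show ?thesis .
  qed
  define Mz where "Mz = mset zs"
  define Mr where "Mr = mset (map \<rho> [0..<s - 1])"
  define M1 where "M1 = proots F - Mz"
  have count_Mz: "count Mz x = (if x \<in> Z then 1 else 0)" for x
    unfolding Mz_def using dist_zs set_zs by (simp add: distinct_count_atmost_1)
  have Mz_sub: "Mz \<subseteq># proots F"
  proof (rule mset_subset_eqI)
    fix x show "count Mz x \<le> count (proots F) x"
      using count_Mz[of x] F0 Z unfolding Z_def by (auto simp: order_root)
  qed
  have pF: "proots F = M1 + Mz" unfolding M1_def using Mz_sub by simp
  have count_Mr: "count Mr x \<le> (if x \<in> Z then 0 else 1)" for x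
  proof -
    have dr: "distinct (map \<rho> [0..<s - 1])"
    proof (rule distinct_conv_nth[THEN iffD2], intro allI impI)
      fix i j assume "i < length (map \<rho> [0..<s - 1])" "j < length (map \<rho> [0..<s - 1])" "i \<noteq> j"
      then show "map \<rho> [0..<s - 1] ! i \<noteq> map \<rho> [0..<s - 1] ! j"
        using rho_mono[of i j] rho_mono[of j i] by (cases "i < j") auto
    qed
    have "count Mr x \<le> 1" unfolding Mr_def using dr by (simp add: distinct_count_atmost_1)
    moreover have "x \<in> Z \<Longrightarrow> count Mr x = 0" unfolding Mr_def using rho_notZ
      by (auto simp: count_eq_zero_iff)
    ultimately show ?thesis by auto
  qed
  have dF': "pderiv F \<noteq> 0" using dF by (simp add: pderiv_eq_0_iff)
  have sub: "M1 + Mr \<subseteq># proots (pderiv F)"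
  proof (rule mset_subset_eqI)
    fix x
    show "count (M1 + Mr) x \<le> count (proots (pderiv F)) x"
    proof (cases "x \<in> Z")
      case True
      then have "poly F x = 0" using Z by auto
      then have "Polynomial.order x F = Suc (Polynomial.order x (pderiv F))" using order_pderiv[OF F0] by auto
      then show ?thesis using True count_Mr[of x] count_Mz[of x] F0 dF' unfolding M1_def by auto
    next
      case False
      have "count M1 x = 0" using False F0 Z unfolding M1_def by (simp add: order_root)
      moreover have "count Mr x \<le> count (proots (pderiv F)) x"
      proof (cases "count Mr x = 0")
        case False
        then have "x \<in># Mr" by (simp add: count_eq_zero_iff)
        then obtain l where "l < s - 1" "x = \<rho> l" unfolding Mr_def by auto
        then have "poly (pderiv F) x = 0" using rho by auto
        then have "count (proots (pderiv F)) x \<ge> 1" using dF' by (simp add: order_root Suc_le_eq)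
        moreover have "count Mr x \<le> 1" using count_Mr[of x] by (auto split: if_splits)
        ultimately show ?thesis by linarith
      qed auto
      ultimately show ?thesis by simp
    qed
  qed
  have szMz: "size Mz = s" unfolding Mz_def s_def by simp
  have szMr: "size Mr = s - 1" unfolding Mr_def by simp
  have "size (proots (pderiv F)) \<le> degree (pderiv F)" by (rule size_proots_le)
  also have "degree (pderiv F) = degree F - 1" by (simp add: degree_pderiv)
  also have "\<dots> = size M1 + s - 1" using szF pF szMz by simp
  also have "\<dots> = size (M1 + Mr)" using szMr s0 by simp
  finally have eq: "M1 + Mr = proots (pderiv F)" using subset_size_eq[OF sub] by simp
  have "size (proots (pderiv F)) = size M1 + size Mr" using eq by (metis size_union)
  then have rrF': "rr (pderiv F)" unfolding rr_def using dF' szF pF szMz szMr s0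
    by (simp add: degree_pderiv)
  have cz: "size (filter_mset P Mz) = card {l. l < Suc (s - 1) \<and> P (zs ! l)}" for P
  proof -
    have "Mz = mset (map (\<lambda>l. zs ! l) [0..<Suc (s - 1)])" unfolding Mz_def s_def using s0
      by (simp add: map_nth s_def)
    then show ?thesis by (simp only: size_filter_mset_map)
  qed
  have cr: "size (filter_mset P Mr) = card {l. l < s - 1 \<and> P (\<rho> l)}" for P
    unfolding Mr_def by (rule size_filter_mset_map)
  have uv: "\<And>l. l < s - 1 \<Longrightarrow> zs ! l < \<rho> l \<and> \<rho> l < zs ! Suc l" using rho by auto
  have key: "\<And>R y. (\<And>a b. a < b \<Longrightarrow> R b y \<Longrightarrow> R a y) \<Longrightarrow>
     size (filter_mset (\<lambda>a. R a y) Mr) \<le> size (filter_mset (\<lambda>a. R a y) Mz) \<and>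
     size (filter_mset (\<lambda>a. R a y) Mz) \<le> Suc (size (filter_mset (\<lambda>a. R a y) Mr))"
    unfolding cz cr
    using cnt_interlace[of "s - 1" "\<lambda>l. zs ! l" \<rho>] uv by blast
  have "Nle (pderiv F) y \<le> Nle F y \<and> Nle F y \<le> Suc (Nle (pderiv F) y) \<and>
        Nlt (pderiv F) y \<le> Nlt F y \<and> Nlt F y \<le> Suc (Nlt (pderiv F) y)" for y
    using key[of "\<lambda>a y. a \<le> y" y] key[of "\<lambda>a y. a < y" y]
    unfolding Nle_def Nlt_def pF eq[symmetric] by auto
  then show ?thesis unfolding intl_def using rrF rrF' dF by (auto simp: degree_pderiv)
qed

lemma Ngt_eq: "rr p \<Longrightarrow> Ngt p y = degree p - Nle p y"
  using Nle_Ngt[of p y] by (auto simp: rr_def)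

lemma order_eq_N: "p \<noteq> 0 \<Longrightarrow> Polynomial.order c p = Nle p c - Nlt p c"
  using Nle_Nlt_count[of p c] by simp

lemma rr_mult_factor:
  assumes "rr (p * q)" shows "rr p" "rr q"
proof -
  have nz: "p \<noteq> 0" "q \<noteq> 0" using assms by (auto simp: rr_def)
  have "size (proots p) + size (proots q) = degree p + degree q"
    using assms nz by (simp add: rr_def proots_mult degree_mult_eq)
  moreover have "size (proots p) \<le> degree p" "size (proots q) \<le> degree q" by (rule size_proots_le)+
  ultimately show "rr p" "rr q" using nz by (auto simp: rr_def)
qed

lemma proots_lin_mult: "q \<noteq> 0 \<Longrightarrow> proots ([:-c,1:] * q) = add_mset c (proots (q::real poly))"
  by (subst proots_mult) auto

lemma degree_lin_mult: "q \<noteq> 0 \<Longrightarrow> degree ([:-c,1:] * q) = Suc (degree (q::real poly))"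
  by (subst degree_mult_eq) auto

lemma intl_add_root:
  assumes "intl h1 g1" shows "intl ([:-c,1:] * h1) ([:-c,1:] * g1)"
proof -
  have nz: "h1 \<noteq> 0" "g1 \<noteq> 0" using assms by (auto simp: intl_def rr_def)
  have rr: "rr ([:-c,1:] * h1)" "rr ([:-c,1:] * g1)" using assms nz
    by (auto simp: intl_def rr_def proots_lin_mult degree_lin_mult)
  show ?thesis using assms rr nz
    unfolding intl_def Nle_def Nlt_def by (auto simp: proots_lin_mult degree_lin_mult)
qed

lemma intl_smult_right: "intl h g \<Longrightarrow> c \<noteq> 0 \<Longrightarrow> intl h (Polynomial.smult c g)"
  by (auto simp: intl_def rr_def Nle_def Nlt_def)

lemma rr_div_sign:
  assumes rrh: "rr h" and lh: "lead_coeff h > 0" and hq: "h = [:-c,1:]^m * q"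
  shows "(m < Polynomial.order c h \<longrightarrow> poly q c = 0) \<and> (m = Polynomial.order c h \<longrightarrow> (-1)^(Ngt h c) * poly q c > 0)"
proof -
  have h0: "h \<noteq> 0" using rrh by (auto simp: rr_def)
  have q0: "q \<noteq> 0" using h0 hq by auto
  have ph: "proots h = replicate_mset m c + proots q" using hq q0
    by (simp add: proots_mult proots_power)
  have "rr ([:-c,1:]^m * q)" using rrh hq by simp
  then have rrq: "rr q" by (rule rr_mult_factor)
  have lq: "lead_coeff q = lead_coeff h" using hq by (simp add: lead_coeff_mult lead_coeff_power)
  have qf: "q = Polynomial.smult (lead_coeff q) (\<Prod>a\<in>#proots q. [:-a,1:])" by (rule rr_factor[OF rrq])
  have cnt: "count (proots q) c = Polynomial.order c h - m" using ph h0 by (simp add: count_proots[symmetric])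
  have part1: "m < Polynomial.order c h \<longrightarrow> poly q c = 0"
  proof
    assume "m < Polynomial.order c h"
    then have "count (proots q) c > 0" using cnt by simp
    then have "c \<in># proots q" by (simp only: count_greater_zero_iff)
    then show "poly q c = 0" using q0 by simp
  qed
  have part2: "m = Polynomial.order c h \<longrightarrow> (-1)^(Ngt h c) * poly q c > 0"
  proof
    assume "m = Polynomial.order c h"
    then have nc: "c \<notin># proots q" using cnt by (simp add: count_eq_zero_iff)
    have "filter_mset (\<lambda>a. c < a) (proots h) = filter_mset (\<lambda>a. c < a) (proots q)"
      unfolding ph by (induction m) auto
    then have ng: "Ngt h c = size (filter_mset (\<lambda>a. c < a) (proots q))" unfolding Ngt_def by simp
    have pq: "poly q c = lead_coeff q * (\<Prod>a\<in>#proots q. c - a)"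
      by (subst qf) (simp add: poly_prod_lin)
    have "(-1::real)^(size (filter_mset (\<lambda>a. c < a) (proots q))) * (\<Prod>a\<in>#proots q. c - a) > 0"
      by (rule sign_prod_lin[OF nc])
    then show "(-1)^(Ngt h c) * poly q c > 0" unfolding ng pq using lq lh
      by (simp add: mult.left_commute)
  qed
  show ?thesis using part1 part2 by blast
qed



lemma intl_cone_up:
  assumes I: "intl h g" and lh: "lead_coeff h > 0"
  shows "cone g h"
  unfolding cone_def
proof (intro allI impI)
  fix c assume gc: "poly g c = 0"
  have rrh: "rr h" and rrg: "rr g" and dh: "degree h = Suc (degree g)" using I by (auto simp: intl_def)
  have h0: "h \<noteq> 0" and g0: "g \<noteq> 0" using rrh rrg by (auto simp: rr_def)
  have c1: "Nle g c \<le> Nle h c" "Nle h c \<le> Suc (Nle g c)" "Nlt g c \<le> Nlt h c" "Nlt h c \<le> Suc (Nlt g c)"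
    using I by (auto simp: intl_def)
  have og: "Polynomial.order c g = Nle g c - Nlt g c" "Nlt g c \<le> Nle g c" using order_eq_N[OF g0] Nle_Nlt_count[of g c] by auto
  have oh: "Polynomial.order c h = Nle h c - Nlt h c" "Nlt h c \<le> Nle h c" using order_eq_N[OF h0] Nle_Nlt_count[of h c] by auto
  have "Polynomial.order c g \<ge> 1" using gc g0 by (simp add: order_root Suc_le_eq)
  have ge: "Polynomial.order c g - 1 \<le> Polynomial.order c h" using og oh c1 by linarith
  then have "[:-c,1:]^(Polynomial.order c g - 1) dvd h" by (simp add: order_divides)
  then obtain q where q: "h = [:-c,1:]^(Polynomial.order c g - 1) * q" by (elim dvdE)
  note S = rr_div_sign[OF rrh lh q]
  show "\<exists>q. h = [:- c, 1:] ^ (Polynomial.order c g - 1) * q \<and> (- 1) ^ Ngt g c * poly q c \<le> 0"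
  proof (intro exI conjI)
    show "h = [:- c, 1:] ^ (Polynomial.order c g - 1) * q" by fact
    show "(- 1) ^ Ngt g c * poly q c \<le> 0"
    proof (cases "Polynomial.order c g - 1 < Polynomial.order c h")
      case True then show ?thesis using S by simp
    next
      case False
      then have eqo: "Polynomial.order c g - 1 = Polynomial.order c h" using ge by simp
      have "Nle h c = Nle g c" using og oh c1 eqo \<open>Polynomial.order c g \<ge> 1\<close> by linarith
      moreover have "Nle g c + Ngt g c = degree g" using Nle_Ngt[of g c] rrg unfolding rr_def by simp
      ultimately have "Ngt h c = Suc (Ngt g c)" using Ngt_eq[OF rrh, of c] Ngt_eq[OF rrg, of c] dh by linarith
      moreover have "(-1)^(Ngt h c) * poly q c > 0" using S eqo by simp
      ultimately show ?thesis by simp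
    qed
  qed
qed

lemma intl_cone_down:
  assumes I: "intl h g" and lg: "lead_coeff g > 0"
  shows "cone h (-g)"
  unfolding cone_def
proof (intro allI impI)
  fix c assume hc: "poly h c = 0"
  have rrh: "rr h" and rrg: "rr g" and dh: "degree h = Suc (degree g)" using I by (auto simp: intl_def)
  have h0: "h \<noteq> 0" and g0: "g \<noteq> 0" using rrh rrg by (auto simp: rr_def)
  have c1: "Nle g c \<le> Nle h c" "Nle h c \<le> Suc (Nle g c)" "Nlt g c \<le> Nlt h c" "Nlt h c \<le> Suc (Nlt g c)"
    using I by (auto simp: intl_def)
  have og: "Polynomial.order c g = Nle g c - Nlt g c" "Nlt g c \<le> Nle g c" using order_eq_N[OF g0] Nle_Nlt_count[of g c] by auto
  have oh: "Polynomial.order c h = Nle h c - Nlt h c" "Nlt h c \<le> Nle h c" using order_eq_N[OF h0] Nle_Nlt_count[of h c] by auto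
  have "Polynomial.order c h \<ge> 1" using hc h0 by (simp add: order_root Suc_le_eq)
  have ge: "Polynomial.order c h - 1 \<le> Polynomial.order c g" using og oh c1 by linarith
  then have "[:-c,1:]^(Polynomial.order c h - 1) dvd g" by (simp add: order_divides)
  then obtain q where q: "g = [:-c,1:]^(Polynomial.order c h - 1) * q" by (elim dvdE)
  note S = rr_div_sign[OF rrg lg q]
  show "\<exists>q. -g = [:- c, 1:] ^ (Polynomial.order c h - 1) * q \<and> (- 1) ^ Ngt h c * poly q c \<le> 0"
  proof (intro exI conjI)
    show "-g = [:- c, 1:] ^ (Polynomial.order c h - 1) * (-q)" using q by simp
    show "(- 1) ^ Ngt h c * poly (-q) c \<le> 0"
    proof (cases "Polynomial.order c h - 1 < Polynomial.order c g")
      case True then show ?thesis using S by simp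
    next
      case False
      then have eqo: "Polynomial.order c h - 1 = Polynomial.order c g" using ge by simp
      have "Suc (Nle g c) = Nle h c" using og oh c1 eqo \<open>Polynomial.order c h \<ge> 1\<close> by linarith
      moreover have "Nle h c + Ngt h c = degree h" using Nle_Ngt[of h c] rrh unfolding rr_def by simp
      ultimately have "Ngt h c = Ngt g c" using Ngt_eq[OF rrh, of c] Ngt_eq[OF rrg, of c] dh by linarith
      moreover have "(-1)^(Ngt g c) * poly q c > 0" using S eqo by simp
      ultimately show ?thesis by simp
    qed
  qed
qed

lemma cone_zero: "cone g 0"
  unfolding cone_def by (auto intro: exI[of _ 0])

lemma cone_add: "cone g h1 \<Longrightarrow> cone g h2 \<Longrightarrow> cone g (h1 + h2)"
  unfolding cone_def
proof (intro allI impI)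
  fix c assume A: "\<forall>c. poly g c = 0 \<longrightarrow> (\<exists>q. h1 = [:- c, 1:] ^ (Polynomial.order c g - 1) * q \<and> (- 1) ^ Ngt g c * poly q c \<le> 0)"
    "\<forall>c. poly g c = 0 \<longrightarrow> (\<exists>q. h2 = [:- c, 1:] ^ (Polynomial.order c g - 1) * q \<and> (- 1) ^ Ngt g c * poly q c \<le> 0)"
    and gc: "poly g c = 0"
  obtain q1 where q1: "h1 = [:- c, 1:] ^ (Polynomial.order c g - 1) * q1" "(- 1) ^ Ngt g c * poly q1 c \<le> 0" using A(1) gc by blast
  obtain q2 where q2: "h2 = [:- c, 1:] ^ (Polynomial.order c g - 1) * q2" "(- 1) ^ Ngt g c * poly q2 c \<le> 0" using A(2) gc by blast
  show "\<exists>q. h1 + h2 = [:- c, 1:] ^ (Polynomial.order c g - 1) * q \<and> (- 1) ^ Ngt g c * poly q c \<le> 0"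
    by (rule exI[of _ "q1 + q2"]) (use q1 q2 in \<open>auto simp: algebra_simps\<close>)
qed

lemma cone_smult: "cone g h \<Longrightarrow> (a::real) \<ge> 0 \<Longrightarrow> cone g (Polynomial.smult a h)"
  unfolding cone_def
proof (intro allI impI)
  fix c assume A: "\<forall>c. poly g c = 0 \<longrightarrow> (\<exists>q. h = [:- c, 1:] ^ (Polynomial.order c g - 1) * q \<and> (- 1) ^ Ngt g c * poly q c \<le> 0)"
    and a: "a \<ge> 0" and gc: "poly g c = 0"
  obtain q1 where q1: "h = [:- c, 1:] ^ (Polynomial.order c g - 1) * q1" "(- 1) ^ Ngt g c * poly q1 c \<le> 0" using A gc by blast
  have "(- 1) ^ Ngt g c * poly (Polynomial.smult a q1) c = a * ((- 1) ^ Ngt g c * poly q1 c)" by simp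
  also have "\<dots> \<le> 0" using a q1(2) by (simp add: mult_nonneg_nonpos)
  finally show "\<exists>q. Polynomial.smult a h = [:- c, 1:] ^ (Polynomial.order c g - 1) * q \<and> (- 1) ^ Ngt g c * poly q c \<le> 0"
    using q1(1) by (intro exI[of _ "Polynomial.smult a q1"]) auto
qed

lemma cone_sum: "finite J \<Longrightarrow> (\<And>j. j \<in> J \<Longrightarrow> cone g (f j)) \<Longrightarrow> cone g (\<Sum>j\<in>J. f j)"
proof (induction J rule: finite_induct)
  case empty then show ?case by (simp add: cone_zero)
next
  case (insert j J) then show ?case by (simp add: cone_add)
qed

lemma cone_mult_self:
  assumes g0: "g \<noteq> 0" shows "cone g ([:a,1:] * g)"
  unfolding cone_def
proof (intro allI impI)
  fix c assume gc: "poly g c = 0"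
  obtain g1 where g1: "g = [:-c,1:]^(Polynomial.order c g) * g1" using order_decomp[OF g0] by blast
  have o: "Polynomial.order c g \<ge> 1" using gc g0 by (simp add: order_root Suc_le_eq)
  then have pw: "[:-c,1:]^(Polynomial.order c g) = [:-c,1:]^(Polynomial.order c g - 1) * [:-c,1:]"
    by (subst power_Suc2[symmetric]) simp
  have "[:a,1:] * g = [:a,1:] * ([:-c,1:]^(Polynomial.order c g - 1) * [:-c,1:] * g1)"
    using g1 pw by simp
  then have "[:a,1:] * g = [:-c,1:]^(Polynomial.order c g - 1) * ([:a,1:] * [:-c,1:] * g1)"
    by (simp add: ac_simps)
  then show "\<exists>q. [:a, 1:] * g = [:- c, 1:] ^ (Polynomial.order c g - 1) * q \<and> (- 1) ^ Ngt g c * poly q c \<le> 0"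
    by (intro exI[of _ "[:a,1:] * [:-c,1:] * g1"]) auto
qed



lemma cone_transfer:
  assumes C: "cone ([:-c,1:] * g1) ([:-c,1:] * h1)" and g10: "g1 \<noteq> 0"
  shows "cone g1 h1"
  unfolding cone_def
proof (intro allI impI)
  fix d assume g1d: "poly g1 d = 0"
  define g where "g = [:-c,1:] * g1"
  have g0: "g \<noteq> 0" using g10 by (simp add: g_def)
  have gd: "poly g d = 0" using g1d by (simp add: g_def)
  have pg: "proots g = add_mset c (proots g1)" using g10 by (simp add: g_def proots_lin_mult)
  have "count (proots g) d = count (proots g1) d + (if d = c then 1 else 0)" using pg by auto
  then have og: "Polynomial.order d g = Polynomial.order d g1 + (if d = c then 1 else 0)" using g0 g10 by simp
  have ngt: "Ngt g d = Ngt g1 d + (if d < c then 1 else 0)" unfolding Ngt_def pg by auto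
  obtain q where q: "[:-c,1:]*h1 = [:-d,1:]^(Polynomial.order d g - 1) * q" "(-1)^(Ngt g d) * poly q d \<le> 0"
    using C[unfolded cone_def, rule_format, OF gd[unfolded g_def]] unfolding g_def by blast
  show "\<exists>q. h1 = [:-d,1:]^(Polynomial.order d g1 - 1) * q \<and> (-1)^(Ngt g1 d) * poly q d \<le> 0"
  proof (cases "d = c")
    case True
    have o1: "Polynomial.order d g1 \<ge> 1" using g1d g10 by (simp add: order_root Suc_le_eq)
    have "Polynomial.order d g - 1 = Suc (Polynomial.order d g1 - 1)" using og True o1 by simp
    then have "[:-c,1:]*h1 = [:-c,1:] * ([:-c,1:]^(Polynomial.order d g1 - 1) * q)" using q(1) True by (simp add: mult.assoc)
    then have "h1 = [:-c,1:]^(Polynomial.order d g1 - 1) * q" by simp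
    with q(2) ngt True show ?thesis by auto
  next
    case False
    have od: "Polynomial.order d g = Polynomial.order d g1" using og False by simp
    have "poly ([:-c,1:]*h1) c = 0" by simp
    then have "poly ([:-d,1:]^(Polynomial.order d g - 1) * q) c = 0" using q(1) by simp
    then have "poly q c = 0" using False by simp
    then obtain q1 where q1: "q = [:-c,1:] * q1" by (metis dvdE poly_eq_0_iff_dvd)
    have "[:-c,1:]*h1 = [:-c,1:]*([:-d,1:]^(Polynomial.order d g - 1)*q1)" using q(1) q1 by (simp add: ac_simps)
    then have h1: "h1 = [:-d,1:]^(Polynomial.order d g1 - 1)*q1" using od by simp
    have pq: "poly q d = (d - c) * poly q1 d" using q1 by simp
    define X where "X = (-1::real)^(Ngt g1 d) * poly q1 d"
    have "\<bar>d - c\<bar> * X \<le> 0"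
    proof (cases "d < c")
      case True
      then have "(-1)^(Ngt g d) * poly q d = (c - d) * X" unfolding X_def pq using ngt by (simp add: algebra_simps)
      then show ?thesis using q(2) True by simp
    next
      case False
      then have "(-1)^(Ngt g d) * poly q d = (d - c) * X" unfolding X_def pq using ngt by simp
      then show ?thesis using q(2) False \<open>d \<noteq> c\<close> by simp
    qed
    then have "X \<le> 0" using False by (simp add: mult_le_0_iff)
    then show ?thesis using h1 unfolding X_def by blast
  qed
qed

lemma gl_base:
  assumes rrg: "rr g" and C: "cone g h" and dh: "degree h = Suc (degree g)" and lh: "lead_coeff h > 0"
    and nc: "\<forall>c. poly g c = 0 \<longrightarrow> poly h c \<noteq> 0"
  shows "intl h g"
proof -
  have g0: "g \<noteq> 0" using rrg by (simp add: rr_def)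
  have h0: "h \<noteq> 0" using lh by auto
  define Z where "Z = {x. poly g x = 0}"
  have finZ: "finite Z" unfolding Z_def using g0 poly_roots_finite by blast
  have simple: "Polynomial.order c g = 1 \<and> (-1)^(Ngt g c) * poly h c < 0" if cZ: "c \<in> Z" for c
  proof -
    have gc: "poly g c = 0" using cZ by (simp add: Z_def)
    obtain q where q: "h = [:-c,1:]^(Polynomial.order c g - 1) * q" "(-1)^(Ngt g c) * poly q c \<le> 0"
      using C[unfolded cone_def, rule_format, OF gc] by blast
    have hc: "poly h c \<noteq> 0" using nc gc by blast
    have o1: "Polynomial.order c g \<ge> 1" using gc g0 by (simp add: order_root Suc_le_eq)
    have "Polynomial.order c g - 1 = 0"
    proof (rule ccontr)
      assume "Polynomial.order c g - 1 \<noteq> 0"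
      then have "poly h c = 0" using q(1) by (simp add: zero_power)
      then show False using hc by simp
    qed
    then have o: "Polynomial.order c g - 1 = 0" .
    have oc: "Polynomial.order c g = 1" using o1 o by simp
    have hq: "h = q" using q(1) o by (metis mult_1 power_0)
    have A: "(-1)^(Ngt g c) * poly h c \<le> 0" using q(2) hq by simp
    have B: "(-1)^(Ngt g c) * poly h c \<noteq> 0" using hc by simp
    show ?thesis using oc A B by linarith
  qed
  define zs where "zs = sorted_list_of_set Z"
  define s where "s = length zs"
  have zs_strict: "sorted_wrt (<) zs" unfolding zs_def by simp
  have set_zs: "set zs = Z" using finZ by (simp add: zs_def)
  have dist_zs: "distinct zs" unfolding zs_def by simp
  have pg: "proots g = mset zs"
  proof (rule multiset_eqI)
    fix x show "count (proots g) x = count (mset zs) x"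
      using simple[of x] dist_zs set_zs g0 by (auto simp: Z_def order_root distinct_count_atmost_1)
  qed
  have dg: "degree g = s" using rrg pg by (simp add: rr_def s_def)
  have zsZ: "l < s \<Longrightarrow> zs ! l \<in> Z" for l using set_zs unfolding s_def by auto
  have ngt: "Ngt g (zs ! l) = s - Suc l" if l: "l < s" for l
  proof -
    have "Ngt g (zs ! l) = size (filter_mset (\<lambda>a. zs ! l < a) (mset (map (\<lambda>i. zs ! i) [0..<s])))"
      unfolding Ngt_def pg s_def by (simp add: map_nth)
    also have "\<dots> = card {i. i < s \<and> zs ! l < zs ! i}" by (rule size_filter_mset_map)
    also have "{i. i < s \<and> zs ! l < zs ! i} = {Suc l..<s}"
    proof (rule Set.set_eqI, rule HOL.iffI)
      fix i assume "i \<in> {i. i < s \<and> zs ! l < zs ! i}"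
      then show "i \<in> {Suc l..<s}" using strict_sorted_nth_less[OF zs_strict, of l i] l unfolding s_def by auto
    next
      fix i assume "i \<in> {Suc l..<s}"
      then show "i \<in> {i. i < s \<and> zs ! l < zs ! i}" using sorted_wrt_nth_less[OF zs_strict, of l i] l
        unfolding s_def by auto
    qed
    finally show ?thesis by simp
  qed
  have sgz: "(-1)^(s - l) * poly h (zs ! l) > 0" if l: "l < s" for l
  proof -
    have "(-1)^(s - Suc l) * poly h (zs ! l) < 0" using simple[OF zsZ[OF l]] ngt[OF l] by simp
    moreover have "s - l = Suc (s - Suc l)" using l by simp
    ultimately show ?thesis by simp
  qed
  obtain n1 where n1: "\<forall>x\<ge>n1. lead_coeff h \<le> poly h x" using poly_pinfty_gt_lc[OF lh] by blast
  define h2 where "h2 = Polynomial.smult ((-1)^(Suc s)) (pcompose h [:0,-1:])"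
  have "lead_coeff (pcompose h [:0,-1:]) = lead_coeff h * (-1)^(degree h)"
    by (subst lead_coeff_comp) auto
  then have lh2: "lead_coeff h2 = lead_coeff h" unfolding h2_def using dh dg
    by (simp add: power_mult_distrib[symmetric])
  have ph2: "poly h2 x = (-1)^(Suc s) * poly h (-x)" for x unfolding h2_def by (simp add: poly_pcompose)
  obtain n2 where n2: "\<forall>x\<ge>n2. lead_coeff h2 \<le> poly h2 x" using poly_pinfty_gt_lc[of h2] lh2 lh by auto
  define X where "X = \<bar>n1\<bar> + \<bar>n2\<bar> + (\<Sum>z\<in>Z. \<bar>z\<bar>) + 1"
  have sumge: "(\<Sum>z\<in>Z. \<bar>z\<bar>) \<ge> 0" by (simp add: sum_nonneg)
  have Xz: "\<bar>z\<bar> < X" if "z \<in> Z" for z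
  proof -
    have "\<bar>z\<bar> \<le> (\<Sum>z\<in>Z. \<bar>z\<bar>)" using that finZ by (intro member_le_sum) auto
    then show ?thesis unfolding X_def by simp
  qed
  have X1: "X \<ge> n1" "X \<ge> n2" "X > 0"
    using sumge abs_ge_self[of n1] abs_ge_self[of n2] abs_ge_zero[of n1] abs_ge_zero[of n2]
    unfolding X_def by linarith+
  define b where "b i = (if i = 0 then -X else if i \<le> s then zs ! (i - 1) else X)" for i
  have sgb: "(-1)^(Suc s - i) * poly h (b i) > 0" if i: "i \<le> Suc s" for i
  proof (cases "i = 0")
    case True
    have "poly h2 X \<ge> lead_coeff h2" using n2 X1 by auto
    then have "(-1)^(Suc s) * poly h (-X) > 0" using ph2[of X] lh2 lh by simp
    then show ?thesis using True by (simp add: b_def)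
  next
    case False
    show ?thesis
    proof (cases "i \<le> s")
      case True
      then have "b i = zs ! (i - 1)" "Suc s - i = s - (i - 1)" using False by (auto simp: b_def)
      then show ?thesis using sgz[of "i - 1"] True False by simp
    next
      case False
      then have "i = Suc s" using i by simp
      then have "b i = X" by (simp add: b_def)
      then show ?thesis using n1 X1 lh \<open>i = Suc s\<close> by force
    qed
  qed
  have bmono: "b i \<le> b (Suc i)" for i
  proof -
    consider "i = 0" "s = 0" | "i = 0" "s > 0" | "i > 0" "Suc i \<le> s" | "i = s" "i > 0" | "i > s" by linarith
    then show ?thesis
    proof cases
      case 1 then show ?thesis using X1 by (simp add: b_def)
    next
      case 2
      then have "zs ! 0 \<in> Z" using zsZ by simp
      then show ?thesis using 2 Xz[of "zs ! 0"] by (simp add: b_def)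
    next
      case 3
      then have "b i = zs ! (i - 1)" "b (Suc i) = zs ! i" by (auto simp: b_def)
      then show ?thesis using 3 sorted_wrt_nth_less[OF zs_strict, of "i - 1" i] unfolding s_def
        by simp
    next
      case 4
      then have "zs ! (i - 1) \<in> Z" using zsZ by simp
      then show ?thesis using 4 Xz[of "zs ! (i - 1)"] by (simp add: b_def)
    next
      case 5 then show ?thesis by (simp add: b_def)
    qed
  qed
  have bstrict: "b i < b (Suc i)" if "i \<le> s" for i
  proof -
    have "b i \<le> b (Suc i)" by (rule bmono)
    moreover have "poly h (b i) * poly h (b (Suc i)) < 0"
    proof -
      define e where "e = (-1::real)^(s - i)"
      have e2: "e * e = 1" unfolding e_def by (simp add: power_mult_distrib[symmetric])
      have "Suc s - i = Suc (s - i)" using that by simp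
      then have A: "(- e) * poly h (b i) > 0" using sgb[of i] that unfolding e_def by simp
      have B: "e * poly h (b (Suc i)) > 0" using sgb[of "Suc i"] that unfolding e_def by simp
      have "((- e) * poly h (b i)) * (e * poly h (b (Suc i))) > 0" by (rule mult_pos_pos[OF A B])
      then have "- (e * e) * (poly h (b i) * poly h (b (Suc i))) > 0" by (simp add: algebra_simps)
      then show ?thesis using e2 by simp
    qed
    then have "b i \<noteq> b (Suc i)" by auto
    ultimately show ?thesis by simp
  qed
  have "\<forall>i. \<exists>x. i \<le> s \<longrightarrow> b i < x \<and> x < b (Suc i) \<and> poly h x = 0"
  proof
    fix i show "\<exists>x. i \<le> s \<longrightarrow> b i < x \<and> x < b (Suc i) \<and> poly h x = 0"
    proof (cases "i \<le> s")
      case True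
      have "poly h (b i) * poly h (b (Suc i)) < 0"
      proof -
        define e where "e = (-1::real)^(s - i)"
        have e2: "e * e = 1" unfolding e_def by (simp add: power_mult_distrib[symmetric])
        have "Suc s - i = Suc (s - i)" using True by simp
        then have A: "(- e) * poly h (b i) > 0" using sgb[of i] True unfolding e_def by simp
        have B: "e * poly h (b (Suc i)) > 0" using sgb[of "Suc i"] True unfolding e_def by simp
        have "((- e) * poly h (b i)) * (e * poly h (b (Suc i))) > 0" by (rule mult_pos_pos[OF A B])
        then have "- (e * e) * (poly h (b i) * poly h (b (Suc i))) > 0" by (simp add: algebra_simps)
        then show ?thesis using e2 by simp
      qed
      from poly_IVT[OF bstrict[OF True] this] show ?thesis by blast
    qed auto
  qed
  then obtain a where a: "\<And>i. i \<le> s \<Longrightarrow> b i < a i \<and> a i < b (Suc i) \<and> poly h (a i) = 0" by metis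
  have ble: "b i \<le> b j" if "i \<le> j" for i j using lift_Suc_mono_le[of b, OF bmono that] .
  have amono: "a i < a j" if "i < j" "j \<le> s" for i j
  proof -
    have "a i < b (Suc i)" using a[of i] that by auto
    also have "\<dots> \<le> b j" using ble that by simp
    also have "\<dots> < a j" using a[of j] that by auto
    finally show ?thesis .
  qed
  define Ma where "Ma = mset (map a [0..<Suc s])"
  have da: "distinct (map a [0..<Suc s])"
  proof (rule distinct_conv_nth[THEN iffD2], intro allI impI)
    fix i j assume "i < length (map a [0..<Suc s])" "j < length (map a [0..<Suc s])" "i \<noteq> j"
    then show "map a [0..<Suc s] ! i \<noteq> map a [0..<Suc s] ! j"
      using amono[of i j] amono[of j i] by (cases "i < j") (auto simp del: upt_Suc)
  qed
  have sub: "Ma \<subseteq># proots h"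
  proof (rule mset_subset_eqI)
    fix x show "count Ma x \<le> count (proots h) x"
    proof (cases "x \<in># Ma")
      case True
      then obtain i where "i \<le> s" "x = a i" unfolding Ma_def by (auto simp del: upt_Suc simp: less_Suc_eq_le)
      then have "poly h x = 0" using a by auto
      then have "count (proots h) x \<ge> 1" using h0 by (simp add: order_root Suc_le_eq)
      moreover have "count Ma x \<le> 1" unfolding Ma_def using da by (simp add: distinct_count_atmost_1)
      ultimately show ?thesis by linarith
    next
      case False then have "count Ma x = 0" by (simp add: count_eq_zero_iff)
      then show ?thesis by simp
    qed
  qed
  have "size (proots h) \<le> size Ma" using size_proots_le[of h] dh dg unfolding Ma_def by simp
  then have pa: "Ma = proots h" using subset_size_eq[OF sub] by simp
  have "size Ma = Suc s" unfolding Ma_def by simp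
  then have rrh: "rr h" using h0 pa dh dg unfolding rr_def by simp
  have cz: "size (filter_mset P (proots g)) = card {l. l < s \<and> P (zs ! l)}" for P
  proof -
    have "proots g = mset (map (\<lambda>l. zs ! l) [0..<s])" unfolding pg s_def by (simp add: map_nth)
    then show ?thesis by (simp only: size_filter_mset_map)
  qed
  have ca: "size (filter_mset P (proots h)) = card {l. l < Suc s \<and> P (a l)}" for P
    unfolding pa[symmetric] Ma_def by (rule size_filter_mset_map)
  have uv: "\<And>l. l < s \<Longrightarrow> a l < zs ! l \<and> zs ! l < a (Suc l)"
  proof -
    fix l assume l: "l < s"
    have "b (Suc l) = zs ! l" using l by (simp add: b_def)
    then show "a l < zs ! l \<and> zs ! l < a (Suc l)" using a[of l] a[of "Suc l"] l by auto
  qed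
  have key: "\<And>R y. (\<And>a b. a < b \<Longrightarrow> R b y \<Longrightarrow> R a y) \<Longrightarrow>
     size (filter_mset (\<lambda>x. R x y) (proots g)) \<le> size (filter_mset (\<lambda>x. R x y) (proots h)) \<and>
     size (filter_mset (\<lambda>x. R x y) (proots h)) \<le> Suc (size (filter_mset (\<lambda>x. R x y) (proots g)))"
    unfolding cz ca
    using cnt_interlace[of s a "\<lambda>l. zs ! l"] uv by blast
  have "Nle g y \<le> Nle h y \<and> Nle h y \<le> Suc (Nle g y) \<and>
        Nlt g y \<le> Nlt h y \<and> Nlt h y \<le> Suc (Nlt g y)" for y
    using key[of "\<lambda>a y. a \<le> y" y] key[of "\<lambda>a y. a < y" y]
    unfolding Nle_def Nlt_def by auto
  then show ?thesis unfolding intl_def using rrg rrh dh by auto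
qed

lemma gl_up:
  assumes "rr g" "cone g h" "degree h = Suc (degree g)" "lead_coeff h > 0"
  shows "intl h g"
  using assms
proof (induction "degree g" arbitrary: g h rule: less_induct)
  case (less g h)
  show ?case
  proof (cases "\<exists>c. poly g c = 0 \<and> poly h c = 0")
    case False
    then show ?thesis using gl_base less.prems by blast
  next
    case True
    then obtain c where c: "poly g c = 0" "poly h c = 0" by blast
    obtain g1 where g1: "g = [:-c,1:] * g1" using c(1) by (metis dvdE poly_eq_0_iff_dvd)
    obtain h1 where h1: "h = [:-c,1:] * h1" using c(2) by (metis dvdE poly_eq_0_iff_dvd)
    have g0: "g \<noteq> 0" using less.prems by (simp add: rr_def)
    then have g10: "g1 \<noteq> 0" using g1 by auto
    have h10: "h1 \<noteq> 0" using h1 less.prems(4) by auto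
    have rr1: "rr g1" using less.prems(1) g1 rr_mult_factor by blast
    have C1: "cone g1 h1" using cone_transfer[OF _ g10] less.prems(2) g1 h1 by simp
    have dg: "degree g = Suc (degree g1)" using g1 g10 by (simp add: degree_lin_mult)
    have dh: "degree h = Suc (degree h1)" using h1 h10 by (simp add: degree_lin_mult)
    have lh1: "lead_coeff h1 > 0" using less.prems(4) h1 by (simp add: lead_coeff_mult)
    have "intl h1 g1" using less.hyps[of g1 h1] dg dh rr1 C1 lh1 less.prems(3) by simp
    then show ?thesis using intl_add_root g1 h1 by simp
  qed
qed



definition E :: "nat \<Rightarrow> nat set \<Rightarrow> (nat \<Rightarrow> real) \<Rightarrow> real" where
  "E j I f = (\<Sum>S | S \<subseteq> I \<and> card S = j. \<Prod>i\<in>S. f i)"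

lemma esym_E: "esym j xs = E j {..<length xs} (\<lambda>i. xs ! i)"
  unfolding esym_def E_def by simp

lemma E_reindex:
  assumes inj: "inj_on h I"
  shows "E j (h ` I) f = E j I (f \<circ> h)"
proof -
  have eq: "{S. S \<subseteq> h ` I \<and> card S = j} = image h ` {S. S \<subseteq> I \<and> card S = j}"
  proof (rule Set.set_eqI, rule HOL.iffI)
    fix S assume "S \<in> {S. S \<subseteq> h ` I \<and> card S = j}"
    then have S: "S \<subseteq> h ` I" "card S = j" by auto
    then obtain T where T: "T \<subseteq> I" "S = h ` T" by (auto simp: subset_image_iff)
    have "card T = card S" using T inj by (metis card_image inj_on_subset)
    then show "S \<in> image h ` {S. S \<subseteq> I \<and> card S = j}" using T S by auto
  next
    fix S assume "S \<in> image h ` {S. S \<subseteq> I \<and> card S = j}"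
    then obtain T where T: "T \<subseteq> I" "card T = j" "S = h ` T" by auto
    have "card S = card T" using T inj by (metis card_image inj_on_subset)
    then show "S \<in> {S. S \<subseteq> h ` I \<and> card S = j}" using T by auto
  qed
  have injI: "inj_on (image h) {S. S \<subseteq> I \<and> card S = j}"
    using inj_on_image_Pow[OF inj] by (rule inj_on_subset) auto
  have "E j (h ` I) f = (\<Sum>S\<in>image h ` {S. S \<subseteq> I \<and> card S = j}. \<Prod>i\<in>S. f i)"
    unfolding E_def eq ..
  also have "\<dots> = (\<Sum>T\<in>{S. S \<subseteq> I \<and> card S = j}. \<Prod>i\<in>h ` T. f i)"
    by (subst sum.reindex[OF injI]) simp
  also have "\<dots> = (\<Sum>T\<in>{S. S \<subseteq> I \<and> card S = j}. \<Prod>i\<in>T. f (h i))"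
  proof (rule sum.cong)
    fix T assume "T \<in> {S. S \<subseteq> I \<and> card S = j}"
    then have "inj_on h T" using inj by (auto intro: inj_on_subset)
    then show "(\<Prod>i\<in>h ` T. f i) = (\<Prod>i\<in>T. f (h i))" by (simp add: prod.reindex)
  qed simp
  finally show ?thesis unfolding E_def by simp
qed

lemma E_insert:
  assumes fin: "finite I" and a: "a \<notin> I"
  shows "E (Suc j) (insert a I) f = E (Suc j) I f + f a * E j I f"
proof -
  have eq: "{S. S \<subseteq> insert a I \<and> card S = Suc j} =
      {S. S \<subseteq> I \<and> card S = Suc j} \<union> insert a ` {S. S \<subseteq> I \<and> card S = j}"
  proof (rule Set.set_eqI, rule HOL.iffI)
    fix S assume S: "S \<in> {S. S \<subseteq> insert a I \<and> card S = Suc j}"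
    show "S \<in> {S. S \<subseteq> I \<and> card S = Suc j} \<union> insert a ` {S. S \<subseteq> I \<and> card S = j}"
    proof (cases "a \<in> S")
      case True
      have finS: "finite S" using S fin by (auto intro: finite_subset)
      have "S = insert a (S - {a})" using True by auto
      moreover have "card (S - {a}) = j" using S True finS by (simp add: card_Diff_singleton)
      moreover have "S - {a} \<subseteq> I" using S by auto
      ultimately show ?thesis by blast
    next
      case False then show ?thesis using S by auto
    qed
  next
    fix S assume "S \<in> {S. S \<subseteq> I \<and> card S = Suc j} \<union> insert a ` {S. S \<subseteq> I \<and> card S = j}"
    then show "S \<in> {S. S \<subseteq> insert a I \<and> card S = Suc j}"
    proof
      assume "S \<in> insert a ` {S. S \<subseteq> I \<and> card S = j}"
      then obtain T where T: "T \<subseteq> I" "card T = j" "S = insert a T" by auto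
      have "finite T" using T fin by (auto intro: finite_subset)
      moreover have "a \<notin> T" using T a by auto
      ultimately show ?thesis using T a by auto
    qed auto
  qed
  have disj: "{S. S \<subseteq> I \<and> card S = Suc j} \<inter> insert a ` {S. S \<subseteq> I \<and> card S = j} = {}"
    using a by auto
  have finA: "finite {S. S \<subseteq> I \<and> card S = Suc j}" using fin by (auto intro: finite_subset[of _ "Pow I"])
  have finB: "finite {S. S \<subseteq> I \<and> card S = j}" using fin by (auto intro: finite_subset[of _ "Pow I"])
  have inj: "inj_on (insert a) {S. S \<subseteq> I \<and> card S = j}"
    unfolding inj_on_def using a by (metis insert_ident mem_Collect_eq subsetD)
  have "E (Suc j) (insert a I) f = E (Suc j) I f + (\<Sum>S\<in>insert a ` {S. S \<subseteq> I \<and> card S = j}. \<Prod>i\<in>S. f i)"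
    unfolding E_def eq using disj finA finB by (subst sum.union_disjoint) auto
  also have "(\<Sum>S\<in>insert a ` {S. S \<subseteq> I \<and> card S = j}. \<Prod>i\<in>S. f i) =
     (\<Sum>T\<in>{S. S \<subseteq> I \<and> card S = j}. \<Prod>i\<in>insert a T. f i)"
    by (subst sum.reindex[OF inj]) simp
  also have "\<dots> = (\<Sum>T\<in>{S. S \<subseteq> I \<and> card S = j}. f a * (\<Prod>i\<in>T. f i))"
  proof (rule sum.cong)
    fix T assume "T \<in> {S. S \<subseteq> I \<and> card S = j}"
    then have "finite T" "a \<notin> T" using fin a by (auto intro: finite_subset)
    then show "(\<Prod>i\<in>insert a T. f i) = f a * (\<Prod>i\<in>T. f i)" by simp
  qed simp
  also have "\<dots> = f a * E j I f" unfolding E_def by (simp add: sum_distrib_left)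
  finally show ?thesis .
qed

lemma E_zero: "finite I \<Longrightarrow> E 0 I f = 1"
proof -
  assume "finite I"
  then have "{S. S \<subseteq> I \<and> card S = 0} = {{}}" by (auto dest: finite_subset)
  then show ?thesis unfolding E_def by simp
qed

lemma E_empty: "E (Suc j) {} f = 0"
  unfolding E_def by simp

lemma esym_0: "esym 0 xs = 1"
  unfolding esym_E by (simp add: E_zero)

lemma esym_Nil: "esym (Suc j) [] = 0"
  unfolding esym_E by (simp add: E_empty)

lemma esym_Cons: "esym (Suc j) (x # xs) = esym (Suc j) xs + x * esym j xs"
proof -
  have I: "{..<length (x # xs)} = insert 0 (Suc ` {..<length xs})"
    by (simp add: lessThan_Suc_eq_insert_0)
  have "esym (Suc j) (x # xs) = E (Suc j) (insert 0 (Suc ` {..<length xs})) (\<lambda>i. (x # xs) ! i)"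
    unfolding esym_E I ..
  also have "\<dots> = E (Suc j) (Suc ` {..<length xs}) (\<lambda>i. (x # xs) ! i) + x * E j (Suc ` {..<length xs}) (\<lambda>i. (x # xs) ! i)"
    by (subst E_insert) auto
  also have "\<dots> = esym (Suc j) xs + x * esym j xs"
    unfolding esym_E by (simp add: E_reindex comp_def)
  finally show ?thesis .
qed

lemma E_cong: "(\<And>i. i \<in> I \<Longrightarrow> f i = g i) \<Longrightarrow> E j I f = E j I g"
  unfolding E_def by (intro sum.cong prod.cong) auto

lemma esym_mset:
  assumes "mset xs = mset ys" shows "esym j xs = esym j ys"
proof -
  obtain p where p: "p permutes {..<length ys}" "permute_list p ys = xs"
    using mset_eq_permutation[OF assms] by blast
  have len: "length xs = length ys" using assms by (metis size_mset)
  have "esym j xs = E j {..<length ys} ((\<lambda>i. ys ! i) \<circ> p)"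
    unfolding esym_E len
  proof (rule E_cong)
    fix i assume "i \<in> {..<length ys}"
    then show "xs ! i = ((\<lambda>i. ys ! i) \<circ> p) i" using p by (auto simp: permute_list_nth)
  qed
  also have "\<dots> = E j (p ` {..<length ys}) (\<lambda>i. ys ! i)"
    using p(1) by (simp add: E_reindex permutes_inj_on)
  also have "\<dots> = esym j ys" unfolding esym_E using p(1) by (simp add: permutes_image)
  finally show ?thesis .
qed

fun ep :: "nat \<Rightarrow> real list \<Rightarrow> real poly" where
  "ep 0 xs = 1"
| "ep (Suc l) [] = 0"
| "ep (Suc l) (x # xs) = ep (Suc l) xs + [:x,1:] * ep l xs"

lemma poly_ep: "poly (ep l xs) t = esym l (map (\<lambda>x. x + t) xs)"
  by (induction l xs rule: ep.induct) (auto simp: esym_0 esym_Nil esym_Cons algebra_simps)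

lemma ep_mset: "mset xs = mset ys \<Longrightarrow> ep l xs = ep l ys"
  by (intro poly_eq_poly_eq_iff[THEN iffD1] ext) (simp add: poly_ep esym_mset)

lemma ep_big: "length xs < l \<Longrightarrow> ep l xs = 0"
proof (induction l xs rule: ep.induct)
  case (3 l x xs)
  then show ?case by (cases l) auto
qed auto

lemma ep_full: "ep (length xs) xs = (\<Prod>a\<in>#mset (map uminus xs). [:-a,1:])"
proof (induction xs)
  case (Cons x xs)
  have "ep (length (x # xs)) (x # xs) = [:x,1:] * ep (length xs) xs" by (simp add: ep_big)
  then show ?case using Cons by simp
qed simp

lemma ep_degree_coeff: "degree (ep l xs) \<le> l \<and> coeff (ep l xs) l = of_nat (length xs choose l)"
proof (induction l xs rule: ep.induct)
  case (1 xs) then show ?case by simp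
next
  case (2 l) then show ?case by simp
next
  case (3 l x xs)
  have d1: "degree (ep (Suc l) xs) \<le> Suc l" using 3 by simp
  have d2: "degree ([:x,1:] * ep l xs) \<le> Suc l"
    using 3 degree_mult_le[of "[:x,1:]" "ep l xs"] by simp
  have "degree (ep (Suc l) (x # xs)) \<le> Suc l" using d1 d2 by (simp add: degree_add_le)
  moreover have "coeff ([:x,1:] * ep l xs) (Suc l) = coeff (ep l xs) l"
  proof -
    have "coeff (ep l xs) (Suc l) = 0" using 3 by (simp add: coeff_eq_0)
    then show ?thesis by (simp add: mult_pCons_left)
  qed
  ultimately show ?case using 3 by simp
qed

lemma ep_degree: "l \<le> length xs \<Longrightarrow> degree (ep l xs) = l"
  using ep_degree_coeff[of l xs] by (metis binomial_eq_0_iff le_degree linorder_not_le of_nat_eq_0_iff order_antisym)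

lemma ep_lead: "l \<le> length xs \<Longrightarrow> lead_coeff (ep l xs) = of_nat (length xs choose l)"
  using ep_degree_coeff[of l xs] ep_degree[of l xs] by simp

lemma ep_lead_pos: "l \<le> length xs \<Longrightarrow> lead_coeff (ep l xs) > 0"
  by (simp add: ep_lead)

lemma pderiv_lin_mult: "pderiv ([:x,1:] * p) = p + [:x,1:] * pderiv (p::real poly)"
  by (simp add: pderiv_mult pderiv_pCons)

lemma ep_pderiv: "pderiv (ep (Suc l) xs) = Polynomial.smult (of_nat (length xs - l)) (ep l xs)"
proof (induction xs arbitrary: l)
  case Nil then show ?case by simp
next
  case (Cons x xs)
  have "pderiv (ep (Suc l) (x # xs)) = pderiv (ep (Suc l) xs) + ep l xs + [:x,1:] * pderiv (ep l xs)"
    by (simp add: pderiv_add pderiv_lin_mult)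
  also have "\<dots> = Polynomial.smult (of_nat (length xs - l)) (ep l xs) + ep l xs + [:x,1:] * pderiv (ep l xs)"
    using Cons by simp
  also have "\<dots> = Polynomial.smult (of_nat (length (x # xs) - l)) (ep l (x # xs))"
  proof (cases l)
    case 0 then show ?thesis by (simp add: one_pCons)
  next
    case (Suc l')
    have IH: "pderiv (ep l xs) = Polynomial.smult (of_nat (length xs - l')) (ep l' xs)" using Cons Suc by simp
    show ?thesis
    proof (cases "l \<le> length xs")
      case True
      have "real (length xs - l) + 1 = real (length xs - l')" using True Suc by (simp add: of_nat_diff)
      moreover have "real (length (x # xs) - l) = real (length xs - l')" using True Suc by simp
      have gen: "Polynomial.smult c A + A + P * Polynomial.smult (c+1) B = Polynomial.smult (c+1) (A + P * B)" for c :: real and A P B :: "real poly"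
        by (simp add: algebra_simps smult_add_left smult_add_right)
      show ?thesis using Suc IH gen[of "real (length xs - l)" "ep l xs" "[:x,1:]" "ep l' xs"]
        \<open>real (length xs - l) + 1 = real (length xs - l')\<close> \<open>real (length (x # xs) - l) = real (length xs - l')\<close>
        by (simp only: ep.simps)
    next
      case False
      then have "ep l xs = 0" by (simp add: ep_big)
      moreover have "length xs - l' = 0" "length (x # xs) - l = 0" using False Suc by auto
      ultimately show ?thesis using Suc IH by simp
    qed
  qed
  finally show ?case .
qed



lemma rr_smult: "rr p \<Longrightarrow> c \<noteq> 0 \<Longrightarrow> rr (Polynomial.smult c p)"
  by (auto simp: rr_def)

lemma rr_smult_iff: "c \<noteq> 0 \<Longrightarrow> rr (Polynomial.smult c p) = rr p"
  by (auto simp: rr_def)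

lemma intl_range:
  assumes I: "intl F G" and R: "\<forall>z\<in>#proots F. lo \<le> z \<and> z \<le> hi"
  shows "\<forall>z\<in>#proots G. lo \<le> z \<and> z \<le> hi"
proof
  fix z assume z: "z \<in># proots G"
  have rrF: "rr F" and rrG: "rr G" and dF: "degree F = Suc (degree G)" using I by (auto simp: intl_def)
  have c: "Nle G y \<le> Nle F y" "Nlt F y \<le> Suc (Nlt G y)" for y using I by (auto simp: intl_def)
  show "lo \<le> z \<and> z \<le> hi"
  proof (rule ccontr)
    assume "\<not> (lo \<le> z \<and> z \<le> hi)"
    then consider "z < lo" | "z > hi" by linarith
    then show False
    proof cases
      case 1
      have "filter_mset (\<lambda>a. a \<le> z) (proots F) = {#}" using R 1 by (auto simp: filter_mset_eq_mempty_iff)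
      then have "Nle F z = 0" by (simp add: Nle_def)
      moreover have ne: "filter_mset (\<lambda>a. a \<le> z) (proots G) \<noteq> {#}" using z by auto
      have "size (filter_mset (\<lambda>a. a \<le> z) (proots G)) \<noteq> 0" using ne by (metis size_eq_0_iff_empty)
      then have "Nle G z \<ge> 1" unfolding Nle_def by presburger
      ultimately show False using c(1)[of z] by simp
    next
      case 2
      have "filter_mset (\<lambda>a. a < z) (proots F) = proots F" using R 2 by (auto simp: filter_mset_eq_conv)
      then have "Nlt F z = degree F" using rrF by (simp add: Nlt_def rr_def)
      moreover have "Nlt G z < size (proots G)"
      proof -
        have ne: "filter_mset (\<lambda>a. \<not> a < z) (proots G) \<noteq> {#}" using z by auto
        have "size (filter_mset (\<lambda>a. \<not> a < z) (proots G)) \<noteq> 0" using ne by (metis size_eq_0_iff_empty)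
        then have "size (filter_mset (\<lambda>a. \<not> a < z) (proots G)) \<ge> 1" by presburger
        then show ?thesis using size_filter_split[of "\<lambda>a. a < z" "proots G"] unfolding Nlt_def by linarith
      qed
      ultimately show False using c(2)[of z] rrG dF by (simp add: rr_def)
    qed
  qed
qed

lemma ep_rr_range:
  fixes xs :: "real list"
  assumes "m \<le> length xs"
  shows "rr (ep (length xs - m) xs) \<and>
    (xs \<noteq> [] \<longrightarrow> (\<forall>z\<in>#proots (ep (length xs - m) xs). Min (uminus ` set xs) \<le> z \<and> z \<le> Max (uminus ` set xs)))"
  using assms
proof (induction m)
  case 0
  have e: "ep (length xs - 0) xs = (\<Prod>a\<in>#mset (map uminus xs). [:-a,1:])" using ep_full by simp
  have e1: "ep (length xs - 0) xs = Polynomial.smult 1 (\<Prod>a\<in>#mset (map uminus xs). [:-a,1:])" using e by simp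
  have "rr (ep (length xs - 0) xs)" "proots (ep (length xs - 0) xs) = mset (map uminus xs)"
    using rr_of_prod[OF _ e1] by auto
  moreover have "\<forall>z\<in>#mset (map uminus xs). Min (uminus ` set xs) \<le> z \<and> z \<le> Max (uminus ` set xs)"
    by auto
  ultimately show ?case by simp
next
  case (Suc m)
  define l where "l = length xs - Suc m"
  have lm: "length xs - m = Suc l" using Suc.prems unfolding l_def by simp
  have IH: "rr (ep (Suc l) xs)"
    "xs \<noteq> [] \<longrightarrow> (\<forall>z\<in>#proots (ep (Suc l) xs). Min (uminus ` set xs) \<le> z \<and> z \<le> Max (uminus ` set xs))"
    using Suc lm by auto
  have le: "Suc l \<le> length xs" using lm by simp
  have "degree (ep (Suc l) xs) > 0" using ep_degree[OF le] by simp
  then have I: "intl (ep (Suc l) xs) (pderiv (ep (Suc l) xs))" using deriv_intl IH(1) by blast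
  have pd: "pderiv (ep (Suc l) xs) = Polynomial.smult (of_nat (length xs - l)) (ep l xs)" by (rule ep_pderiv)
  have c0: "(of_nat (length xs - l)::real) \<noteq> 0" using le by simp
  have I2: "intl (ep (Suc l) xs) (ep l xs)"
    using intl_smult_right[OF I, of "inverse (of_nat (length xs - l))"] c0 pd by simp
  have "rr (ep l xs)" using I2 by (simp add: intl_def)
  moreover have "xs \<noteq> [] \<longrightarrow> (\<forall>z\<in>#proots (ep l xs). Min (uminus ` set xs) \<le> z \<and> z \<le> Max (uminus ` set xs))"
    using intl_range[OF I2] IH(2) by blast
  ultimately show ?case unfolding l_def by simp
qed

lemma ep_rr: "l \<le> length xs \<Longrightarrow> rr (ep l xs)"
  using ep_rr_range[of "length xs - l" xs] by simp

lemma ep_range: "l \<le> length xs \<Longrightarrow> xs \<noteq> [] \<Longrightarrow>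
   \<forall>z\<in>#proots (ep l xs). Min (uminus ` set xs) \<le> z \<and> z \<le> Max (uminus ` set xs)"
  using ep_rr_range[of "length xs - l" xs] by simp

lemma ep_intl: "Suc l \<le> length xs \<Longrightarrow> intl (ep (Suc l) xs) (ep l xs)"
proof -
  assume le: "Suc l \<le> length xs"
  have "degree (ep (Suc l) xs) > 0" using ep_degree[OF le] by simp
  then have I: "intl (ep (Suc l) xs) (pderiv (ep (Suc l) xs))" using deriv_intl ep_rr[OF le] by blast
  have pd: "pderiv (ep (Suc l) xs) = Polynomial.smult (of_nat (length xs - l)) (ep l xs)" by (rule ep_pderiv)
  have c0: "(of_nat (length xs - l)::real) \<noteq> 0" using le by simp
  show ?thesis
    using intl_smult_right[OF I, of "inverse (of_nat (length xs - l))"] c0 pd by simp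
qed

definition rem :: "nat \<Rightarrow> 'a list \<Rightarrow> 'a list" where
  "rem j xs = take j xs @ drop (Suc j) xs"

lemma mset_rem: "j < length xs \<Longrightarrow> mset xs = mset (xs ! j # rem j xs)"
  unfolding rem_def by (subst id_take_nth_drop[of j xs]) auto

lemma length_rem: "j < length xs \<Longrightarrow> length (rem j xs) = length xs - 1"
  unfolding rem_def by simp

lemma ep_rem: "j < length xs \<Longrightarrow> ep (Suc l) xs = ep (Suc l) (rem j xs) + [:xs ! j, 1:] * ep l (rem j xs)"
  using ep_mset[OF mset_rem[of j xs], of "Suc l"] by simp

lemma main_poly:
  fixes rs :: "real list" and w :: "nat \<Rightarrow> real" and r00 :: real
  assumes k1: "1 \<le> k" and kn: "k \<le> length rs" and w: "\<And>j. j < length rs \<Longrightarrow> w j \<ge> 0"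
  defines "P \<equiv> [:r00,1:] * ep k rs - (\<Sum>j<length rs. Polynomial.smult (w j) (ep (k - 1) (rem j rs)))"
  shows "intl P (ep k rs) \<and> lead_coeff P > 0"
proof -
  define n where "n = length rs"
  define \<sigma> where "\<sigma> = ep k rs"
  obtain k' where k': "k = Suc k'" using k1 by (cases k) auto
  have rrs: "rr \<sigma>" unfolding \<sigma>_def using ep_rr kn by blast
  have ds: "degree \<sigma> = k" unfolding \<sigma>_def using ep_degree kn by blast
  have ls: "lead_coeff \<sigma> > 0" unfolding \<sigma>_def using ep_lead_pos kn by blast
  have s0: "\<sigma> \<noteq> 0" using ls by auto
  have gj: "intl \<sigma> (ep k' (rem j rs)) \<and> degree (ep k' (rem j rs)) = k' \<and> lead_coeff (ep k' (rem j rs)) > 0"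
    if j: "j < n" for j
  proof -
    define \<nu> where "\<nu> = rem j rs"
    have lnu: "length \<nu> = n - 1" unfolding \<nu>_def n_def using j n_def length_rem by auto
    have k'n: "k' \<le> length \<nu>" using lnu kn k' n_def by simp
    have rrg: "rr (ep k' \<nu>)" using ep_rr k'n by blast
    have dg: "degree (ep k' \<nu>) = k'" using ep_degree k'n by blast
    have lg: "lead_coeff (ep k' \<nu>) > 0" using ep_lead_pos k'n by blast
    have g0: "ep k' \<nu> \<noteq> 0" using lg by auto
    have se: "\<sigma> = ep k \<nu> + [:rs ! j, 1:] * ep k' \<nu>" unfolding \<sigma>_def \<nu>_def k'
      using ep_rem j n_def by blast
    have c1: "cone (ep k' \<nu>) (ep k \<nu>)"
    proof (cases "k \<le> length \<nu>")
      case True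
      then show ?thesis using intl_cone_up[OF ep_intl] ep_lead_pos k' by simp
    next
      case False
      then have "ep k \<nu> = 0" by (simp add: ep_big)
      then show ?thesis by (simp add: cone_zero)
    qed
    have c2: "cone (ep k' \<nu>) ([:rs ! j, 1:] * ep k' \<nu>)" using cone_mult_self[OF g0] .
    have "cone (ep k' \<nu>) \<sigma>" unfolding se using cone_add[OF c1 c2] .
    then have "intl \<sigma> (ep k' \<nu>)" using gl_up[OF rrg] ds dg ls k' by simp
    then show ?thesis using dg lg unfolding \<nu>_def by simp
  qed
  define S where "S = (\<Sum>j<n. Polynomial.smult (w j) (- ep k' (rem j rs)))"
  have P: "P = [:r00,1:] * \<sigma> + S" unfolding P_def S_def \<sigma>_def n_def k'
    by (simp add: sum_negf[symmetric] smult_minus_right)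
  have cS: "cone \<sigma> S" unfolding S_def
  proof (rule cone_sum)
    fix j assume "j \<in> {..<n}"
    then have j: "j < n" by simp
    have "cone \<sigma> (- ep k' (rem j rs))" using intl_cone_down gj[OF j] by blast
    then show "cone \<sigma> (Polynomial.smult (w j) (- ep k' (rem j rs)))" using cone_smult w[of j] j n_def by blast
  qed simp
  have cP: "cone \<sigma> P" unfolding P using cone_add[OF cone_mult_self[OF s0] cS] .
  have d1: "degree ([:r00,1:] * \<sigma>) = Suc k" using ds s0 by (simp add: degree_mult_eq)
  have l1: "lead_coeff ([:r00,1:] * \<sigma>) = lead_coeff \<sigma>" by (simp add: lead_coeff_mult)
  have dS: "degree S \<le> k'" unfolding S_def
  proof (rule degree_sum_le[THEN order_trans])
    show "finite {..<n}" by simp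
  next
    fix j assume "j \<in> {..<n}"
    then have j: "j < n" by simp
    have "degree (Polynomial.smult (w j) (- ep k' (rem j rs))) \<le> degree (ep k' (rem j rs))"
      by (simp add: degree_smult_le[THEN order_trans])
    then show "degree (Polynomial.smult (w j) (- ep k' (rem j rs))) \<le> k'" using gj[OF j] by simp
  qed simp
  then have dlt: "degree S < degree ([:r00,1:] * \<sigma>)" using d1 k' by simp
  have dP: "degree P = Suc (degree \<sigma>)" unfolding P using d1 dlt ds k'
    by (subst degree_add_eq_left) auto
  have lP: "lead_coeff P = lead_coeff \<sigma>" unfolding P using dlt l1
    by (metis add.commute lead_coeff_add_le)
  have "intl P \<sigma>" using gl_up[OF rrs cP dP] lP ls by simp
  then show ?thesis using lP ls unfolding \<sigma>_def by simp
qed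




definition dmat :: "real list \<Rightarrow> real mat" where
  "dmat es = mat (length es) (length es) (\<lambda>(i,j). if i = j then es ! i else 0)"

lemma dmat_carrier[simp]: "dmat es \<in> carrier_mat (length es) (length es)"
  by (simp add: dmat_def)

lemma conj_real_vec: "conjugate (v :: real vec) = v"
  by (rule eq_vecI) (auto simp: conjugate_vec_def conjugate_real_def)

lemma degree_prod_lin_list: "degree (\<Prod>e\<leftarrow>es. [:- e, 1::real:]) = length es"
proof (induction es)
  case (Cons e es)
  have "(\<Prod>e\<leftarrow>es. [:- e, 1::real:]) \<noteq> 0" by (auto simp: prod_list_zero_iff)
  then show ?case using Cons degree_lin_mult[of _ e] by simp
qed simp

lemma entry_congr:
  assumes W: "W \<in> carrier_mat n n" and A: "A \<in> carrier_mat n n" and i: "i < n" and j: "j < n"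
  shows "(transpose_mat W * A * W) $$ (i,j) = col W i \<bullet> (A *\<^sub>v col W j)"
proof -
  have "transpose_mat W * A * W = transpose_mat W * (A * W)" using W A by (simp add: assoc_mult_mat)
  then show ?thesis using W A i j by (simp add: mult_mat_vec_def)
qed

lemma orthonormal_ext:
  fixes u :: "real vec"
  assumes u: "u \<in> carrier_vec n" and uu: "u \<bullet> u = 1"
  shows "\<exists>W \<in> carrier_mat n n. transpose_mat W * W = 1\<^sub>m n \<and> col W 0 = u"
proof -
  interpret cof_vec_space n "TYPE(real)" .
  have u0: "u \<noteq> 0\<^sub>v n" using uu u by auto
  define b where "b = basis_completion u"
  from basis_completion[OF u u0, folded b_def]
  have b: "set b \<subseteq> carrier_vec n" and dist_b: "distinct b"
    and indep: "\<not> lin_dep (set b)" and hdb: "hd b = u" and len_b: "length b = n" by auto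
  have n0: "n > 0" using u0 u by (cases n) auto
  from hdb len_b n0 obtain vs where bv: "b = u # vs" by (cases b) auto
  define ws where "ws = gram_schmidt n b"
  from gram_schmidt_result[OF b dist_b indep refl, folded ws_def]
  have ws: "set ws \<subseteq> carrier_vec n" "corthogonal ws" "length ws = n" by (auto simp: len_b)
  have hdws: "hd ws = u" unfolding ws_def bv using u by simp
  have orth: "ws ! i \<bullet> ws ! j = 0 \<longleftrightarrow> i \<noteq> j" if "i < n" "j < n" for i j
    using ws(2) that ws(3) unfolding corthogonal_def by (auto simp: scalar_prod_def conj_real_vec)
  define ws' where "ws' = map (\<lambda>w. (1 / sqrt (w \<bullet> w)) \<cdot>\<^sub>v w) ws"
  have ws'_c: "ws' ! i \<in> carrier_vec n" if "i < n" for i using ws that unfolding ws'_def by auto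
  have pos: "ws ! i \<bullet> ws ! i > 0" if "i < n" for i
  proof -
    have "ws ! i \<in> carrier_vec n" using ws that by auto
    then have "ws ! i \<bullet> ws ! i \<ge> 0" by (simp add: scalar_prod_def sum_nonneg)
    moreover have "ws ! i \<bullet> ws ! i \<noteq> 0" using orth[OF that that] by simp
    ultimately show ?thesis by simp
  qed
  have on: "ws' ! i \<bullet> ws' ! j = (if i = j then 1 else 0)" if "i < n" "j < n" for i j
  proof -
    have ci: "ws ! i \<in> carrier_vec n" "ws ! j \<in> carrier_vec n" using ws that by auto
    have "ws' ! i \<bullet> ws' ! j = (1 / sqrt (ws ! i \<bullet> ws ! i)) * (1 / sqrt (ws ! j \<bullet> ws ! j)) * (ws ! i \<bullet> ws ! j)"
      unfolding ws'_def using that ws ci by simp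
    then show ?thesis using orth[OF that] pos[OF that(1)] pos[OF that(2)]
      by (auto simp: real_sqrt_mult[symmetric] simp del: real_sqrt_mult)
  qed
  define W where "W = mat_of_cols n ws'"
  have lws': "length ws' = n" unfolding ws'_def using ws by simp
  have Wc: "W \<in> carrier_mat n n" unfolding W_def using mat_of_cols_carrier(1)[of n ws'] lws' by simp
  have colW: "col W i = ws' ! i" if "i < n" for i unfolding W_def using that ws'_c lws' by simp
  have "transpose_mat W * W = 1\<^sub>m n"
  proof (rule eq_matI)
    fix i j assume "i < dim_row (1\<^sub>m n)" "j < dim_col (1\<^sub>m n)"
    then have ij: "i < n" "j < n" by auto
    then show "(transpose_mat W * W) $$ (i, j) = 1\<^sub>m n $$ (i, j)" using Wc colW on by simp
  qed (use Wc in auto)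
  moreover have "col W 0 = u"
  proof -
    have "ws ! 0 = u" using hdws ws(3) n0 by (cases ws) auto
    then show ?thesis using colW[OF n0] uu unfolding ws'_def using n0 ws(3) by simp
  qed
  ultimately show ?thesis using Wc by blast
qed

lemma assoc5:
  assumes P: "P \<in> carrier_mat n n" and Q: "Q \<in> carrier_mat n n" and R: "R \<in> carrier_mat n n"
    and S: "S \<in> carrier_mat n n" and T: "T \<in> carrier_mat n n"
  shows "(P * Q) * R * (S * T) = P * (Q * R * S) * T"
proof -
  have PQR: "P * Q * R \<in> carrier_mat n n" using P Q R by simp
  have e1: "(P * Q) * R * (S * T) = ((P * Q) * R * S) * T"
    using assoc_mult_mat[OF PQR S T] by simp
  have e2: "(P * Q) * R = P * (Q * R)" using assoc_mult_mat[OF P Q R] .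
  have QR: "Q * R \<in> carrier_mat n n" using Q R by simp
  have e3: "P * (Q * R) * S = P * (Q * R * S)" using assoc_mult_mat[OF P QR S] .
  show ?thesis using e1 e2 e3 by simp
qed

lemma assoc4:
  assumes P: "P \<in> carrier_mat n n" and Q: "Q \<in> carrier_mat n n" and S: "S \<in> carrier_mat n n" and T: "T \<in> carrier_mat n n"
  shows "(P * Q) * (S * T) = P * (Q * S) * T"
proof -
  have PQ: "P * Q \<in> carrier_mat n n" using P Q by simp
  have e1: "(P * Q) * (S * T) = ((P * Q) * S) * T" using assoc_mult_mat[OF PQ S T] by simp
  have e2: "(P * Q) * S = P * (Q * S)" using assoc_mult_mat[OF P Q S] .
  show ?thesis using e1 e2 by simp
qed

lemma colW_orth:
  assumes W: "W \<in> carrier_mat n n" and WW: "transpose_mat W * W = 1\<^sub>m n" and i: "i < n" and j: "j < n"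
  shows "col W i \<bullet> col W j = (if i = j then 1 else 0)"
proof -
  have "(transpose_mat W * W) $$ (i,j) = col W i \<bullet> col W j" using W i j by simp
  then show ?thesis using WW i j by simp
qed

lemma spectral:
  fixes A :: "real mat"
  assumes "A \<in> carrier_mat n n" "transpose_mat A = A" "char_poly A = (\<Prod>e\<leftarrow>es. [:-e,1:])"
  shows "\<exists>W\<in>carrier_mat n n. transpose_mat W * W = 1\<^sub>m n \<and> W * transpose_mat W = 1\<^sub>m n \<and>
           transpose_mat W * A * W = dmat es"
  using assms
proof (induction es arbitrary: n A)
  case Nil
  have n0: "n = 0" using degree_monic_char_poly[OF Nil.prems(1)] Nil.prems(3) by simp
  show ?case
  proof (intro bexI conjI)
    show "transpose_mat (1\<^sub>m n) * 1\<^sub>m n = 1\<^sub>m n" using n0 by (intro eq_matI) auto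
    show "1\<^sub>m n * transpose_mat (1\<^sub>m n) = 1\<^sub>m n" using n0 by (intro eq_matI) auto
    show "transpose_mat (1\<^sub>m n) * A * 1\<^sub>m n = dmat []"
      using Nil.prems(1) n0 by (intro eq_matI) (auto simp: dmat_def)
  qed simp
next
  case (Cons e es n A)
  have A: "A \<in> carrier_mat n n" and sym: "transpose_mat A = A" and cp: "char_poly A = (\<Prod>e\<leftarrow>e#es. [:-e,1:])"
    using Cons.prems by auto
  define m where "m = length es"
  have n: "n = Suc m" using degree_monic_char_poly[OF A] cp degree_prod_lin_list[of "e#es"] m_def by simp
  have "poly (char_poly A) e = 0" by (simp add: cp)
  then have ev: "eigenvalue A e" using eigenvalue_root_char_poly[OF A] by simp
  define v where "v = find_eigenvector A e"
  have "eigenvector A v e" using find_eigenvector[OF A ev] v_def by simp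
  then have v: "v \<in> carrier_vec n" "v \<noteq> 0\<^sub>v n" "A *\<^sub>v v = e \<cdot>\<^sub>v v"
    unfolding eigenvector_def using A by auto
  have vv: "v \<bullet> v > 0" using conjugate_square_greater_0_vec[OF v(1)] v(2) by (simp add: conj_real_vec)
  define u where "u = (1 / sqrt (v \<bullet> v)) \<cdot>\<^sub>v v"
  have u: "u \<in> carrier_vec n" using v unfolding u_def by simp
  have uu: "u \<bullet> u = 1" unfolding u_def using v vv by (simp add: real_sqrt_mult[symmetric] del: real_sqrt_mult)
  have Au: "A *\<^sub>v u = e \<cdot>\<^sub>v u" unfolding u_def using mult_mat_vec[OF A v(1)] v(3)
    by (simp add: smult_smult_assoc mult.commute)
  obtain W1 where W1: "W1 \<in> carrier_mat n n" "transpose_mat W1 * W1 = 1\<^sub>m n" "col W1 0 = u"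
    using orthonormal_ext[OF u uu] by blast
  have W1T: "transpose_mat W1 \<in> carrier_mat n n" using W1 by simp
  have W1W1T: "W1 * transpose_mat W1 = 1\<^sub>m n" using mat_mult_left_right_inverse[OF W1T W1(1) W1(2)] .
  define A' where "A' = transpose_mat W1 * A * W1"
  have A'c: "A' \<in> carrier_mat n n" unfolding A'_def using W1 A by simp
  have entA': "A' $$ (i,j) = col W1 i \<bullet> (A *\<^sub>v col W1 j)" if "i < n" "j < n" for i j
    unfolding A'_def using entry_congr[OF W1(1) A that] .
  have symA': "A' $$ (i,j) = A' $$ (j,i)" if "i < n" "j < n" for i j
  proof -
    have ci: "col W1 i \<in> carrier_vec n" "col W1 j \<in> carrier_vec n" using W1 that by auto
    have "col W1 i \<bullet> (A *\<^sub>v col W1 j) = (transpose_mat A *\<^sub>v col W1 i) \<bullet> col W1 j"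
      using transpose_vec_mult_scalar[OF A ci(2) ci(1)] by simp
    also have "\<dots> = col W1 j \<bullet> (A *\<^sub>v col W1 i)" unfolding sym
      using comm_scalar_prod[of "A *\<^sub>v col W1 i" n "col W1 j"] A ci by simp
    finally show ?thesis using entA' that by simp
  qed
  have col0: "A' $$ (i,0) = (if i = 0 then e else 0)" if "i < n" for i
  proof -
    have n0: "0 < n" using n by simp
    have "A' $$ (i,0) = col W1 i \<bullet> (e \<cdot>\<^sub>v col W1 0)" using entA'[OF that n0] W1(3) Au by simp
    also have "\<dots> = e * (col W1 i \<bullet> col W1 0)" using W1(1) by simp
    also have "\<dots> = (if i = 0 then e else 0)" using colW_orth[OF W1(1) W1(2) that n0] by simp
    finally show ?thesis .
  qed
  define A3 where "A3 = mat m m (\<lambda>(i,j). A' $$ (Suc i, Suc j))"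
  have A3c: "A3 \<in> carrier_mat m m" unfolding A3_def by simp
  define E1 where "E1 = mat 1 1 (\<lambda>_. e)"
  have E1c: "E1 \<in> carrier_mat 1 1" unfolding E1_def by simp
  have blk: "A' = four_block_mat E1 (0\<^sub>m 1 m) (0\<^sub>m m 1) A3"
  proof (rule eq_matI)
    fix i j assume ij: "i < dim_row (four_block_mat E1 (0\<^sub>m 1 m) (0\<^sub>m m 1) A3)"
      "j < dim_col (four_block_mat E1 (0\<^sub>m 1 m) (0\<^sub>m m 1) A3)"
    then have i: "i < n" and j: "j < n" using n E1c A3c by auto
    show "A' $$ (i, j) = four_block_mat E1 (0\<^sub>m 1 m) (0\<^sub>m m 1) A3 $$ (i, j)"
    proof (cases "j = 0")
      case True then show ?thesis using col0[OF i] i n E1c A3c by (simp add: E1_def)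
    next
      case False
      show ?thesis
      proof (cases "i = 0")
        case True
        then have "A' $$ (i,j) = 0" using symA'[OF i j] col0[OF j] False by simp
        then show ?thesis using True False j n E1c A3c by (simp add: E1_def)
      next
        case False2: False
        then show ?thesis using False i j n E1c A3c by (simp add: A3_def)
      qed
    qed
  qed (use A'c n E1c A3c in auto)
  have simAA': "similar_mat_wit A A' W1 (transpose_mat W1)"
  proof -
    have "W1 * A' * transpose_mat W1 = (W1 * transpose_mat W1) * A * (W1 * transpose_mat W1)"
      unfolding A'_def using assoc5[OF W1(1) W1T A W1(1) W1T] by simp
    also have "\<dots> = A" using W1W1T A by simp
    finally show ?thesis unfolding similar_mat_wit_def Let_def using A A'c W1 W1T W1W1T by auto
  qed
  have "char_poly A = char_poly A'" using char_poly_similar simAA' unfolding similar_mat_def by blast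
  also have "char_poly A' = char_poly E1 * char_poly A3"
    unfolding blk by (rule char_poly_four_block_zeros_col[OF E1c _ A3c]) simp
  also have "char_poly E1 = [:-e,1:]"
  proof -
    have "upper_triangular E1" unfolding E1_def upper_triangular_def by auto
    then have "char_poly E1 = (\<Prod>a\<leftarrow>diag_mat E1. [:- a, 1:])" using char_poly_upper_triangular[OF E1c] by simp
    moreover have "diag_mat E1 = [e]" unfolding E1_def diag_mat_def by simp
    ultimately show ?thesis by simp
  qed
  finally have X: "char_poly A = [:-e,1:] * char_poly A3" .
  have Y: "char_poly A = [:-e,1:] * (\<Prod>e\<leftarrow>es. [:-e,1:])" by (simp only: cp list.map prod_list.Cons)
  have cp3: "char_poly A3 = (\<Prod>e\<leftarrow>es. [:-e,1:])" using X Y by (metis mult_cancel_left pCons_eq_0_iff zero_neq_one)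
  have sym3: "transpose_mat A3 = A3"
    by (rule eq_matI) (use symA' n in \<open>auto simp: A3_def\<close>)
  obtain W2 where W2: "W2 \<in> carrier_mat m m" "transpose_mat W2 * W2 = 1\<^sub>m m" "W2 * transpose_mat W2 = 1\<^sub>m m"
    "transpose_mat W2 * A3 * W2 = dmat es"
    using Cons.IH[OF A3c sym3 cp3] by blast
  define B where "B = four_block_mat (1\<^sub>m 1) (0\<^sub>m 1 m) (0\<^sub>m m 1) W2"
  have Bc: "B \<in> carrier_mat n n" unfolding B_def using four_block_carrier_mat[OF one_carrier_mat[of 1] W2(1)] n by simp
  have BT: "transpose_mat B = four_block_mat (1\<^sub>m 1) (0\<^sub>m 1 m) (0\<^sub>m m 1) (transpose_mat W2)"
    unfolding B_def using W2 by (subst transpose_four_block_mat) auto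
  have BTc: "transpose_mat B \<in> carrier_mat n n" using Bc by simp
  have W2T: "transpose_mat W2 \<in> carrier_mat m m" using W2 by simp
  have BTB: "transpose_mat B * B = 1\<^sub>m n"
  proof -
    have "transpose_mat B * B = four_block_mat (1\<^sub>m 1) (0\<^sub>m 1 m) (0\<^sub>m m 1) (transpose_mat W2) *
          four_block_mat (1\<^sub>m 1) (0\<^sub>m 1 m) (0\<^sub>m m 1) W2" by (subst BT) (simp only: B_def)
    also have "\<dots> = four_block_mat (1\<^sub>m 1 * 1\<^sub>m 1 + 0\<^sub>m 1 m * 0\<^sub>m m 1) (1\<^sub>m 1 * 0\<^sub>m 1 m + 0\<^sub>m 1 m * W2)
        (0\<^sub>m m 1 * 1\<^sub>m 1 + transpose_mat W2 * 0\<^sub>m m 1) (0\<^sub>m m 1 * 0\<^sub>m 1 m + transpose_mat W2 * W2)"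
      by (rule mult_four_block_mat) (use W2 W2T in auto)
    also have "\<dots> = four_block_mat (1\<^sub>m 1) (0\<^sub>m 1 m) (0\<^sub>m m 1) (1\<^sub>m m)"
      using W2 W2T by simp
    also have "\<dots> = 1\<^sub>m n" using n by simp
    finally show ?thesis .
  qed
  define W where "W = W1 * B"
  have Wc: "W \<in> carrier_mat n n" unfolding W_def using W1 Bc by simp
  have WT: "transpose_mat W = transpose_mat B * transpose_mat W1" unfolding W_def
    using W1 Bc by (simp add: transpose_mult)
  have WTW: "transpose_mat W * W = 1\<^sub>m n"
  proof -
    have "transpose_mat W * W = transpose_mat B * transpose_mat W1 * (W1 * B)"
      by (simp only: WT) (simp only: W_def)
    then have "transpose_mat W * W = transpose_mat B * (transpose_mat W1 * W1) * B"
      using assoc4[OF BTc W1T W1(1) Bc] by simp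
    then show ?thesis using W1(2) BTB Bc BTc by simp
  qed
  have WWT: "W * transpose_mat W = 1\<^sub>m n"
    using mat_mult_left_right_inverse[OF _ Wc WTW] Wc by simp
  have "transpose_mat W * A * W = transpose_mat B * transpose_mat W1 * A * (W1 * B)"
    by (simp only: WT) (simp only: W_def)
  also have "\<dots> = transpose_mat B * A' * B"
    unfolding A'_def using assoc5[OF BTc W1T A W1(1) Bc] by simp
  also have "\<dots> = (four_block_mat (1\<^sub>m 1) (0\<^sub>m 1 m) (0\<^sub>m m 1) (transpose_mat W2) *
          four_block_mat E1 (0\<^sub>m 1 m) (0\<^sub>m m 1) A3) * four_block_mat (1\<^sub>m 1) (0\<^sub>m 1 m) (0\<^sub>m m 1) W2"
    by (subst BT, subst blk) (simp only: B_def)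
  also have "four_block_mat (1\<^sub>m 1) (0\<^sub>m 1 m) (0\<^sub>m m 1) (transpose_mat W2) *
          four_block_mat E1 (0\<^sub>m 1 m) (0\<^sub>m m 1) A3 =
     four_block_mat (1\<^sub>m 1 * E1 + 0\<^sub>m 1 m * 0\<^sub>m m 1) (1\<^sub>m 1 * 0\<^sub>m 1 m + 0\<^sub>m 1 m * A3)
        (0\<^sub>m m 1 * E1 + transpose_mat W2 * 0\<^sub>m m 1) (0\<^sub>m m 1 * 0\<^sub>m 1 m + transpose_mat W2 * A3)"
    by (rule mult_four_block_mat) (use W2T E1c A3c in auto)
  also have "\<dots> = four_block_mat E1 (0\<^sub>m 1 m) (0\<^sub>m m 1) (transpose_mat W2 * A3)"
    using W2T E1c A3c by simp
  also have "four_block_mat E1 (0\<^sub>m 1 m) (0\<^sub>m m 1) (transpose_mat W2 * A3) *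
      four_block_mat (1\<^sub>m 1) (0\<^sub>m 1 m) (0\<^sub>m m 1) W2 =
     four_block_mat (E1 * 1\<^sub>m 1 + 0\<^sub>m 1 m * 0\<^sub>m m 1) (E1 * 0\<^sub>m 1 m + 0\<^sub>m 1 m * W2)
        (0\<^sub>m m 1 * 1\<^sub>m 1 + (transpose_mat W2 * A3) * 0\<^sub>m m 1) (0\<^sub>m m 1 * 0\<^sub>m 1 m + (transpose_mat W2 * A3) * W2)"
    by (rule mult_four_block_mat) (use W2 W2T E1c A3c in auto)
  also have "\<dots> = four_block_mat E1 (0\<^sub>m 1 m) (0\<^sub>m m 1) (transpose_mat W2 * A3 * W2)"
  proof -
    have Dc: "transpose_mat W2 * A3 * W2 \<in> carrier_mat m m" using W2T A3c W2(1) by (intro mult_carrier_mat)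
    show ?thesis using W2 W2T E1c A3c Dc by simp
  qed
  also have "\<dots> = dmat (e # es)"
    unfolding W2(4) by (rule eq_matI) (auto simp: dmat_def E1_def m_def nth_Cons')
  finally have "transpose_mat W * A * W = dmat (e # es)" .
  then show ?case using Wc WTW WWT by blast
qed



lemma interlace_lists:
  fixes \<alpha> \<beta> :: "real list"
  assumes sa: "sorted \<alpha>" and sb: "sorted \<beta>" and la: "length \<alpha> = Suc m" and lb: "length \<beta> = m"
   and c1: "\<And>y. card {i. i < m \<and> \<beta> ! i \<le> y} \<le> card {i. i < Suc m \<and> \<alpha> ! i \<le> y}"
   and c2: "\<And>y. card {i. i < Suc m \<and> \<alpha> ! i \<le> y} \<le> Suc (card {i. i < m \<and> \<beta> ! i \<le> y})"
   and i: "i < m"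
  shows "\<alpha> ! i \<le> \<beta> ! i \<and> \<beta> ! i \<le> \<alpha> ! (i + 1)"
proof
  show "\<alpha> ! i \<le> \<beta> ! i"
  proof (rule ccontr)
    assume "\<not> \<alpha> ! i \<le> \<beta> ! i"
    then have lt: "\<beta> ! i < \<alpha> ! i" by simp
    have "{..i} \<subseteq> {j. j < m \<and> \<beta> ! j \<le> \<beta> ! i}" using sorted_nth_mono[OF sb] i lb by auto
    then have "card {..i} \<le> card {j. j < m \<and> \<beta> ! j \<le> \<beta> ! i}" by (intro card_mono) auto
    then have A: "Suc i \<le> card {j. j < m \<and> \<beta> ! j \<le> \<beta> ! i}" by simp
    have "{j. j < Suc m \<and> \<alpha> ! j \<le> \<beta> ! i} \<subseteq> {..<i}"
    proof
      fix j assume j: "j \<in> {j. j < Suc m \<and> \<alpha> ! j \<le> \<beta> ! i}"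
      show "j \<in> {..<i}"
      proof (rule ccontr)
        assume "j \<notin> {..<i}"
        then have "i \<le> j" by simp
        then have "\<alpha> ! i \<le> \<alpha> ! j" using sorted_nth_mono[OF sa] j la by auto
        then show False using j lt by simp
      qed
    qed
    then have "card {j. j < Suc m \<and> \<alpha> ! j \<le> \<beta> ! i} \<le> i" using card_mono[of "{..<i}"] by fastforce
    then show False using A c1[of "\<beta> ! i"] by simp
  qed
  show "\<beta> ! i \<le> \<alpha> ! (i + 1)"
  proof (rule ccontr)
    assume "\<not> \<beta> ! i \<le> \<alpha> ! (i + 1)"
    then have lt: "\<alpha> ! (i + 1) < \<beta> ! i" by simp
    have "{..Suc i} \<subseteq> {j. j < Suc m \<and> \<alpha> ! j \<le> \<alpha> ! (i + 1)}" using sorted_nth_mono[OF sa] i la by auto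
    then have "card {..Suc i} \<le> card {j. j < Suc m \<and> \<alpha> ! j \<le> \<alpha> ! (i + 1)}" by (intro card_mono) auto
    then have A: "Suc (Suc i) \<le> card {j. j < Suc m \<and> \<alpha> ! j \<le> \<alpha> ! (i + 1)}" by simp
    have "{j. j < m \<and> \<beta> ! j \<le> \<alpha> ! (i + 1)} \<subseteq> {..<i}"
    proof
      fix j assume j: "j \<in> {j. j < m \<and> \<beta> ! j \<le> \<alpha> ! (i + 1)}"
      show "j \<in> {..<i}"
      proof (rule ccontr)
        assume "j \<notin> {..<i}"
        then have "i \<le> j" by simp
        then have "\<beta> ! i \<le> \<beta> ! j" using sorted_nth_mono[OF sb] j lb by auto
        then show False using j lt by simp
      qed
    qed
    then have "card {j. j < m \<and> \<beta> ! j \<le> \<alpha> ! (i + 1)} \<le> i" using card_mono[of "{..<i}"] by fastforce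
    then show False using A c2[of "\<alpha> ! (i + 1)"] by simp
  qed
qed

lemma Nle_list:
  assumes h: "mset xs = proots p" shows "Nle p y = card {i. i < length xs \<and> xs ! i \<le> y}"
proof -
  have "Nle p y = size (filter_mset (\<lambda>a. a \<le> y) (mset xs))" unfolding Nle_def h ..
  also have "\<dots> = size (mset (filter (\<lambda>a. a \<le> y) xs))" by (simp only: mset_filter)
  also have "\<dots> = length (filter (\<lambda>a. a \<le> y) xs)" by (simp only: size_mset)
  also have "\<dots> = card {i. i < length xs \<and> xs ! i \<le> y}" by (simp only: length_filter_conv_card)
  finally show ?thesis .
qed

lemma prod_proots_list:
  assumes "mset xs = M"
  shows "(\<Prod>a\<in>#M. t - a) = (\<Prod>i<length xs. t - xs ! i)"
proof -
  have "(\<Prod>a\<in>#M. t - a) = prod_list (map (\<lambda>a. t - a) xs)"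
    using assms by (metis mset_map prod_mset_prod_list)
  also have "\<dots> = (\<Prod>i<length xs. t - xs ! i)"
    by (subst prod.list_conv_set_nth) (auto simp: atLeast0LessThan)
  finally show ?thesis .
qed

lemma proots_prod_list_lin: "proots (\<Prod>e\<leftarrow>es. [:-e,1::real:]) = mset es"
proof -
  have "(\<Prod>e\<leftarrow>es. [:-e,1::real:]) = (\<Prod>a\<in>#mset es. [:-a,1:])"
    by (metis mset_map prod_mset_prod_list)
  then show ?thesis by (simp add: proots_prod_lin)
qed

lemma newton_telescope:
  assumes j: "j < length mu"
  shows "(\<Sum>i<Suc m. (-1)^i * esym (m - i) mu * (mu ! j)^i) = esym m (rem j mu)"
proof (induction m)
  case 0 then show ?case by (simp add: esym_0)
next
  case (Suc m)
  define x where "x = mu ! j"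
  define a where "a l = esym l (rem j mu)" for l
  have e: "esym (Suc l) mu = a (Suc l) + x * a l" for l
    using esym_mset[OF mset_rem[OF j], of "Suc l"] by (simp add: esym_Cons a_def x_def)
  have "(\<Sum>i<Suc (Suc m). (-1)^i * esym (Suc m - i) mu * x^i) =
        esym (Suc m) mu + (\<Sum>i<Suc m. (-1)^(Suc i) * esym (Suc m - Suc i) mu * x^(Suc i))"
    by (subst sum.lessThan_Suc_shift) simp
  also have "(\<Sum>i<Suc m. (-1)^(Suc i) * esym (Suc m - Suc i) mu * x^(Suc i)) =
       - x * (\<Sum>i<Suc m. (-1)^i * esym (m - i) mu * x^i)"
    by (simp add: sum_distrib_left algebra_simps)
  also have "(\<Sum>i<Suc m. (-1)^i * esym (m - i) mu * x^i) = a m" using Suc unfolding a_def x_def .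
  finally show ?case using e[of m] unfolding a_def x_def by simp
qed



lemma dmat_mult: "length d1 = length d2 \<Longrightarrow> dmat d1 * dmat d2 = dmat (map2 (*) d1 d2)"
proof (rule eq_matI)
  fix i j assume l: "length d1 = length d2" and ij: "i < dim_row (dmat (map2 (*) d1 d2))" "j < dim_col (dmat (map2 (*) d1 d2))"
  then have i: "i < length d1" and j: "j < length d1" by (auto simp: dmat_def)
  have "(dmat d1 * dmat d2) $$ (i, j) = (\<Sum>l<length d1. (if i = l then d1 ! i else 0) * (if l = j then d2 ! l else 0))"
    using i j l by (simp add: dmat_def scalar_prod_def row_def col_def atLeast0LessThan)
  also have "\<dots> = (\<Sum>l<length d1. if l = i then (if i = j then d1 ! i * d2 ! i else 0) else 0)"
    by (rule sum.cong) auto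
  also have "\<dots> = (if i = j then d1 ! i * d2 ! i else 0)" using i by simp
  finally show "(dmat d1 * dmat d2) $$ (i, j) = dmat (map2 (*) d1 d2) $$ (i, j)"
    using i j l by (simp add: dmat_def)
qed (auto simp: dmat_def)

lemma dmat_pow: "dmat d ^\<^sub>m i = dmat (map (\<lambda>x. x ^ i) d)"
proof (induction i)
  case 0
  show ?case by (rule eq_matI) (auto simp: dmat_def)
next
  case (Suc i)
  have "dmat d ^\<^sub>m Suc i = dmat (map (\<lambda>x. x ^ i) d) * dmat d" using Suc by simp
  also have "\<dots> = dmat (map2 (*) (map (\<lambda>x. x ^ i) d) d)" by (rule dmat_mult) simp
  also have "map2 (*) (map (\<lambda>x. x ^ i) d) d = map (\<lambda>x. x ^ Suc i) d"
    by (rule nth_equalityI) (auto simp: mult.commute)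
  finally show ?case .
qed

lemma foldr_dmat:
  "foldr (\<lambda>i acc. c i \<cdot>\<^sub>m dmat (map (\<lambda>x. x ^ i) d) + acc) L (0\<^sub>m (length d) (length d)) =
   dmat (map (\<lambda>x. \<Sum>i\<leftarrow>L. c i * x ^ i) d)"
proof (induction L)
  case Nil show ?case by (rule eq_matI) (auto simp: dmat_def)
next
  case (Cons a L)
  show ?case unfolding foldr.simps comp_def Cons
    by (rule eq_matI) (auto simp: dmat_def)
qed

lemma similar_W:
  fixes W s :: "real mat"
  assumes W: "W \<in> carrier_mat n n" and WTW: "transpose_mat W * W = 1\<^sub>m n" and WWT: "W * transpose_mat W = 1\<^sub>m n"
    and s: "s \<in> carrier_mat n n"
  shows "W * (transpose_mat W * s * W) * transpose_mat W = s"
proof -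
  have WT: "transpose_mat W \<in> carrier_mat n n" using W by simp
  have "W * (transpose_mat W * s * W) * transpose_mat W = (W * transpose_mat W) * s * (W * transpose_mat W)"
    using assoc5[OF W WT s W WT] by simp
  then show ?thesis using WWT s left_mult_one_mat[OF s] right_mult_one_mat[OF s] by simp
qed

lemma pow_congr:
  fixes W s :: "real mat"
  assumes W: "W \<in> carrier_mat n n" and WTW: "transpose_mat W * W = 1\<^sub>m n" and WWT: "W * transpose_mat W = 1\<^sub>m n"
    and s: "s \<in> carrier_mat n n"
  shows "transpose_mat W * (s ^\<^sub>m i) * W = (transpose_mat W * s * W) ^\<^sub>m i"
proof -
  define D where "D = transpose_mat W * s * W"
  have WT: "transpose_mat W \<in> carrier_mat n n" using W by simp
  have Dc: "D \<in> carrier_mat n n" unfolding D_def using W WT s by simp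
  have "similar_mat_wit s D W (transpose_mat W)"
    unfolding similar_mat_wit_def Let_def using W WT s Dc WTW WWT similar_W[OF W WTW WWT s]
    by (auto simp: D_def)
  then have si: "s ^\<^sub>m i = W * D ^\<^sub>m i * transpose_mat W" by (rule similar_mat_wit_pow_id)
  have Dic: "D ^\<^sub>m i \<in> carrier_mat n n" using Dc by simp
  have "transpose_mat W * (s ^\<^sub>m i) * W = (transpose_mat W * W) * D ^\<^sub>m i * (transpose_mat W * W)"
    unfolding si using assoc5[OF WT W Dic WT W] by simp
  then show ?thesis using WTW Dic left_mult_one_mat[OF Dic] right_mult_one_mat[OF Dic] unfolding D_def by simp
qed

lemma foldr_congr:
  fixes W s :: "real mat"
  assumes W: "W \<in> carrier_mat n n" and WTW: "transpose_mat W * W = 1\<^sub>m n" and WWT: "W * transpose_mat W = 1\<^sub>m n"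
    and s: "s \<in> carrier_mat n n"
  shows "transpose_mat W * foldr (\<lambda>i acc. c i \<cdot>\<^sub>m (s ^\<^sub>m i) + acc) L (0\<^sub>m n n) * W =
         foldr (\<lambda>i acc. c i \<cdot>\<^sub>m ((transpose_mat W * s * W) ^\<^sub>m i) + acc) L (0\<^sub>m n n)"
proof (induction L)
  case Nil
  have WT: "transpose_mat W \<in> carrier_mat n n" using W by simp
  show ?case using W WT by simp
next
  case (Cons a L)
  have WT: "transpose_mat W \<in> carrier_mat n n" using W by simp
  define F where "F = foldr (\<lambda>i acc. c i \<cdot>\<^sub>m (s ^\<^sub>m i) + acc) L (0\<^sub>m n n)"
  have Fc: "F \<in> carrier_mat n n" unfolding F_def by (induction L) (use s in auto)
  have Sc: "c a \<cdot>\<^sub>m (s ^\<^sub>m a) \<in> carrier_mat n n" using s by simp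
  have "transpose_mat W * (c a \<cdot>\<^sub>m (s ^\<^sub>m a) + F) * W =
        transpose_mat W * (c a \<cdot>\<^sub>m (s ^\<^sub>m a)) * W + transpose_mat W * F * W"
    using WT Sc Fc W by (simp add: mult_add_distrib_mat[OF WT Sc Fc] add_mult_distrib_mat[of _ n n _ W n])
  also have "transpose_mat W * (c a \<cdot>\<^sub>m (s ^\<^sub>m a)) * W = c a \<cdot>\<^sub>m (transpose_mat W * (s ^\<^sub>m a) * W)"
    using WT W s by (simp add: mult_smult_distrib[of _ n n _ n] mult_smult_assoc_mat[of _ n n _ n])
  also have "transpose_mat W * (s ^\<^sub>m a) * W = (transpose_mat W * s * W) ^\<^sub>m a"
    by (rule pow_congr[OF W WTW WWT s])
  finally show ?case using Cons unfolding F_def by simp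
qed

lemma quad_form:
  fixes W N :: "real mat"
  assumes W: "W \<in> carrier_mat n n" and WTW: "transpose_mat W * W = 1\<^sub>m n" and WWT: "W * transpose_mat W = 1\<^sub>m n"
    and N: "N \<in> carrier_mat n n" and ND: "transpose_mat W * N * W = dmat b" and lb: "length b = n"
    and x: "x \<in> carrier_vec n"
  shows "x \<bullet> (N *\<^sub>v x) = (\<Sum>j<n. b ! j * (col W j \<bullet> x)^2)"
proof -
  have WT: "transpose_mat W \<in> carrier_mat n n" using W by simp
  have Dc: "dmat b \<in> carrier_mat n n" using dmat_carrier[of b] lb by simp
  have NN: "N = W * dmat b * transpose_mat W" using similar_W[OF W WTW WWT N] ND by simp
  define y where "y = transpose_mat W *\<^sub>v x"
  have yc: "y \<in> carrier_vec n" unfolding y_def using WT x by simp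
  have "N *\<^sub>v x = W *\<^sub>v (dmat b *\<^sub>v y)" unfolding NN y_def using W WT Dc x
    by (simp add: assoc_mult_mat_vec[of _ n n _ n])
  then have "x \<bullet> (N *\<^sub>v x) = y \<bullet> (dmat b *\<^sub>v y)"
    using transpose_vec_mult_scalar[OF W _ x, of "dmat b *\<^sub>v y"] Dc yc unfolding y_def by simp
  also have "\<dots> = (\<Sum>j<n. y $ j * (b ! j * y $ j))"
  proof -
    have "(dmat b *\<^sub>v y) $ j = b ! j * y $ j" if "j < n" for j
    proof -
      have "(dmat b *\<^sub>v y) $ j = (\<Sum>l<n. (if j = l then b ! j else 0) * y $ l)"
        using that lb yc by (simp add: dmat_def scalar_prod_def row_def atLeast0LessThan)
      also have "\<dots> = (\<Sum>l<n. if l = j then b ! j * y $ j else 0)" by (rule sum.cong) auto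
      finally show ?thesis using that by simp
    qed
    then show ?thesis using yc Dc by (simp add: scalar_prod_def atLeast0LessThan)
  qed
  also have "\<dots> = (\<Sum>j<n. b ! j * (col W j \<bullet> x)^2)"
  proof (rule sum.cong)
    fix j assume "j \<in> {..<n}"
    then have "y $ j = col W j \<bullet> x" unfolding y_def using W by simp
    then show "y $ j * (b ! j * y $ j) = b ! j * (col W j \<bullet> x)^2" by (simp add: power2_eq_square)
  qed simp
  finally show ?thesis .
qed



lemma shift_diag:
  fixes W r :: "real mat"
  assumes W: "W \<in> carrier_mat n n" and WTW: "transpose_mat W * W = 1\<^sub>m n"
    and r: "r \<in> carrier_mat n n" and WD: "transpose_mat W * r * W = dmat rs" and lrs: "length rs = n"
  shows "transpose_mat W * (r + t \<cdot>\<^sub>m 1\<^sub>m n) * W = dmat (map (\<lambda>x. x + t) rs)"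
proof -
  have WT: "transpose_mat W \<in> carrier_mat n n" using W by simp
  have I: "t \<cdot>\<^sub>m 1\<^sub>m n \<in> carrier_mat n n" by simp
  have e1: "transpose_mat W * (r + t \<cdot>\<^sub>m 1\<^sub>m n) = transpose_mat W * r + transpose_mat W * (t \<cdot>\<^sub>m 1\<^sub>m n)"
    by (rule mult_add_distrib_mat[OF WT r I])
  have "transpose_mat W * (r + t \<cdot>\<^sub>m 1\<^sub>m n) * W = transpose_mat W * r * W + transpose_mat W * (t \<cdot>\<^sub>m 1\<^sub>m n) * W"
    unfolding e1 by (rule add_mult_distrib_mat[of _ n n]) (use WT r W I in auto)
  also have "transpose_mat W * (t \<cdot>\<^sub>m 1\<^sub>m n) * W = t \<cdot>\<^sub>m 1\<^sub>m n"
  proof -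
    have e2: "transpose_mat W * (t \<cdot>\<^sub>m 1\<^sub>m n) = t \<cdot>\<^sub>m transpose_mat W"
      using mult_smult_distrib[OF WT one_carrier_mat[of n], of t] right_mult_one_mat[OF WT] by simp
    have "(t \<cdot>\<^sub>m transpose_mat W) * W = t \<cdot>\<^sub>m (transpose_mat W * W)" by (rule mult_smult_assoc_mat[OF WT W])
    then show ?thesis unfolding e2 WTW .
  qed
  also have "transpose_mat W * r * W + t \<cdot>\<^sub>m 1\<^sub>m n = dmat (map (\<lambda>x. x + t) rs)"
    unfolding WD by (rule eq_matI) (auto simp: dmat_def lrs)
  finally show ?thesis .
qed

lemma sigma_shift:
  fixes W r :: "real mat"
  assumes W: "W \<in> carrier_mat n n" and WTW: "transpose_mat W * W = 1\<^sub>m n" and WWT: "W * transpose_mat W = 1\<^sub>m n"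
    and r: "r \<in> carrier_mat n n" and WD: "transpose_mat W * r * W = dmat rs" and lrs: "length rs = n"
  shows "sigma j (r + t \<cdot>\<^sub>m 1\<^sub>m n) = poly (ep j rs) t"
    and "mset (eigvals (r + t \<cdot>\<^sub>m 1\<^sub>m n)) = mset (map (\<lambda>x. x + t) rs)"
proof -
  define s where "s = r + t \<cdot>\<^sub>m 1\<^sub>m n"
  have s: "s \<in> carrier_mat n n" unfolding s_def using r by simp
  define D where "D = dmat (map (\<lambda>x. x + t) rs)"
  have D: "transpose_mat W * s * W = D" unfolding s_def D_def by (rule shift_diag[OF W WTW r WD lrs])
  have Dc: "D \<in> carrier_mat n n" unfolding D_def using dmat_carrier[of "map (\<lambda>x. x + t) rs"] lrs by simp
  have WT: "transpose_mat W \<in> carrier_mat n n" using W by simp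
  have "similar_mat_wit s D W (transpose_mat W)"
    unfolding similar_mat_wit_def Let_def using W WT s Dc WTW WWT similar_W[OF W WTW WWT s] D
    by auto
  then have "char_poly s = char_poly D" using char_poly_similar unfolding similar_mat_def by blast
  also have "char_poly D = (\<Prod>a\<leftarrow>diag_mat D. [:- a, 1:])"
  proof (rule char_poly_upper_triangular[OF Dc])
    show "upper_triangular D" unfolding D_def upper_triangular_def dmat_def by auto
  qed
  also have "diag_mat D = map (\<lambda>x. x + t) rs"
    unfolding D_def diag_mat_def dmat_def by (rule nth_equalityI) auto
  finally have cps: "char_poly s = (\<Prod>a\<leftarrow>map (\<lambda>x. x + t) rs. [:- a, 1:])" .
  have "\<exists>es. char_poly s = (\<Prod>e\<leftarrow>es. [:- e, 1:])" using cps by blast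
  then have "char_poly s = (\<Prod>e\<leftarrow>eigvals s. [:- e, 1:])" unfolding eigvals_def by (rule someI_ex)
  then have "mset (eigvals s) = mset (map (\<lambda>x. x + t) rs)"
    using cps proots_prod_list_lin by metis
  then show "mset (eigvals (r + t \<cdot>\<^sub>m 1\<^sub>m n)) = mset (map (\<lambda>x. x + t) rs)" unfolding s_def .
  then show "sigma j (r + t \<cdot>\<^sub>m 1\<^sub>m n) = poly (ep j rs) t"
    unfolding sigma_def poly_ep by (rule esym_mset)
qed

lemma rem_map: "rem j (map f xs) = map f (rem j xs)"
  unfolding rem_def by (simp add: take_map drop_map)

lemma foldr_carrier:
  fixes s :: "real mat"
  assumes s: "s \<in> carrier_mat n n"
  shows "foldr (\<lambda>i acc. c i \<cdot>\<^sub>m (s ^\<^sub>m i) + acc) L (0\<^sub>m n n) \<in> carrier_mat n n"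
  by (induction L) (use s in auto)

lemma newton_shift:
  fixes W r :: "real mat"
  assumes W: "W \<in> carrier_mat n n" and WTW: "transpose_mat W * W = 1\<^sub>m n" and WWT: "W * transpose_mat W = 1\<^sub>m n"
    and r: "r \<in> carrier_mat n n" and WD: "transpose_mat W * r * W = dmat rs" and lrs: "length rs = n"
    and x: "x \<in> carrier_vec n"
  shows "x \<bullet> (newton_T m (r + t \<cdot>\<^sub>m 1\<^sub>m n) *\<^sub>v x) = (\<Sum>j<n. (col W j \<bullet> x)^2 * poly (ep m (rem j rs)) t)"
proof -
  define s where "s = r + t \<cdot>\<^sub>m 1\<^sub>m n"
  have s: "s \<in> carrier_mat n n" unfolding s_def using r by simp
  define mu where "mu = map (\<lambda>x. x + t) rs"
  have lmu: "length mu = n" unfolding mu_def using lrs by simp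
  define c where "c i = (-1::real) ^ i * sigma (m - i) s" for i
  define N where "N = newton_T m s"
  have Nf: "N = foldr (\<lambda>i acc. c i \<cdot>\<^sub>m (s ^\<^sub>m i) + acc) [0..<Suc m] (0\<^sub>m n n)"
    unfolding N_def newton_T_def c_def using s by simp
  have Nc: "N \<in> carrier_mat n n" unfolding Nf by (rule foldr_carrier[OF s])
  have D: "transpose_mat W * s * W = dmat mu" unfolding s_def mu_def by (rule shift_diag[OF W WTW r WD lrs])
  have "transpose_mat W * N * W = foldr (\<lambda>i acc. c i \<cdot>\<^sub>m (dmat mu ^\<^sub>m i) + acc) [0..<Suc m] (0\<^sub>m n n)"
    unfolding Nf foldr_congr[OF W WTW WWT s] D ..
  also have "\<dots> = dmat (map (\<lambda>y. \<Sum>i\<leftarrow>[0..<Suc m]. c i * y ^ i) mu)"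
    unfolding dmat_pow using foldr_dmat[of c mu "[0..<Suc m]"] lmu by simp
  finally have ND: "transpose_mat W * N * W = dmat (map (\<lambda>y. \<Sum>i\<leftarrow>[0..<Suc m]. c i * y ^ i) mu)" .
  have "x \<bullet> (N *\<^sub>v x) = (\<Sum>j<n. map (\<lambda>y. \<Sum>i\<leftarrow>[0..<Suc m]. c i * y ^ i) mu ! j * (col W j \<bullet> x)^2)"
    by (rule quad_form[OF W WTW WWT Nc ND]) (use lmu x in auto)
  also have "\<dots> = (\<Sum>j<n. (col W j \<bullet> x)^2 * poly (ep m (rem j rs)) t)"
  proof (rule sum.cong)
    fix j assume "j \<in> {..<n}"
    then have j: "j < n" by simp
    have sig: "sigma l s = esym l mu" for l
      using sigma_shift(1)[OF W WTW WWT r WD lrs, of l t] unfolding s_def mu_def by (simp add: poly_ep)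
    have "map (\<lambda>y. \<Sum>i\<leftarrow>[0..<Suc m]. c i * y ^ i) mu ! j = (\<Sum>i\<leftarrow>[0..<Suc m]. c i * (mu ! j) ^ i)"
      using j lmu by simp
    also have "\<dots> = (\<Sum>i<Suc m. c i * (mu ! j) ^ i)"
      by (subst sum_set_upt_conv_sum_list_nat[symmetric]) (simp add: atLeast0LessThan)
    also have "\<dots> = (\<Sum>i<Suc m. (-1)^i * esym (m - i) mu * (mu ! j) ^ i)"
      unfolding c_def sig ..
    also have "\<dots> = esym m (rem j mu)" using newton_telescope[of j mu m] j lmu by simp
    also have "\<dots> = poly (ep m (rem j rs)) t" unfolding mu_def rem_map poly_ep ..
    finally show "map (\<lambda>y. \<Sum>i\<leftarrow>[0..<Suc m]. c i * y ^ i) mu ! j * (col W j \<bullet> x)^2 =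
       (col W j \<bullet> x)^2 * poly (ep m (rem j rs)) t" by simp
  qed simp
  finally show ?thesis unfolding N_def s_def .
qed



theorem theorem2p2:
  fixes n k :: nat and r :: "real mat" and rs :: "real list"
    and x :: "real vec" and r00 :: real
  assumes "1 \<le> k" and "k \<le> n"
    and "r \<in> carrier_mat n n" and "transpose_mat r = r"
    and "length rs = n" and "char_poly r = (\<Prod>e\<leftarrow>rs. [:- e, 1:])"
    and "x \<in> carrier_vec n"
  shows "\<exists>(\<alpha>::real list) (\<beta>::real list) (c::real) (d::real).
     length \<alpha> = k + 1 \<and> sorted \<alpha> \<and> c \<noteq> 0 \<and>
     (\<forall>t. p_poly k r r00 x t = c * (\<Prod>i<k + 1. t - \<alpha> ! i)) \<and>
     length \<beta> = k \<and> sorted \<beta> \<and> d \<noteq> 0 \<and>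
     (\<forall>t. sigma k (r + t \<cdot>\<^sub>m 1\<^sub>m n) = d * (\<Prod>i<k. t - \<beta> ! i)) \<and>
     (\<forall>i<k. \<alpha> ! i \<le> \<beta> ! i \<and> \<beta> ! i \<le> \<alpha> ! (i + 1)) \<and>
     (\<forall>i. 2 \<le> i \<and> i \<le> k - 1 \<longrightarrow>
        Min (uminus ` set rs) \<le> \<alpha> ! (i - 1) \<and> \<alpha> ! (i - 1) \<le> Max (uminus ` set rs))"
proof -
  have k1: "1 \<le> k" and kn: "k \<le> n" and r: "r \<in> carrier_mat n n" and sym: "transpose_mat r = r"
    and lrs: "length rs = n" and cp: "char_poly r = (\<Prod>e\<leftarrow>rs. [:- e, 1:])" and x: "x \<in> carrier_vec n"
    using assms by auto
  obtain W where W: "W \<in> carrier_mat n n" and WTW: "transpose_mat W * W = 1\<^sub>m n"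
    and WWT: "W * transpose_mat W = 1\<^sub>m n" and WD: "transpose_mat W * r * W = dmat rs"
    using spectral[OF r sym cp] by blast
  define w where "w j = (col W j \<bullet> x)^2" for j
  have w0: "w j \<ge> 0" for j unfolding w_def by simp
  define \<sigma> where "\<sigma> = ep k rs"
  define P where "P = [:r00,1:] * ep k rs - (\<Sum>j<length rs. Polynomial.smult (w j) (ep (k - 1) (rem j rs)))"
  have mp: "intl P \<sigma> \<and> lead_coeff P > 0" unfolding P_def \<sigma>_def
    by (rule main_poly) (use k1 kn lrs w0 in auto)
  have IPs: "intl P \<sigma>" and lP: "lead_coeff P > 0" using mp by auto
  have rrP: "rr P" and rrs: "rr \<sigma>" and dP: "degree P = Suc (degree \<sigma>)" using IPs by (auto simp: intl_def)
  have ds: "degree \<sigma> = k" unfolding \<sigma>_def using ep_degree kn lrs by simp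
  have ls: "lead_coeff \<sigma> > 0" unfolding \<sigma>_def using ep_lead_pos kn lrs by simp
  have sig: "sigma k (r + t \<cdot>\<^sub>m 1\<^sub>m n) = poly \<sigma> t" for t
    unfolding \<sigma>_def by (rule sigma_shift(1)[OF W WTW WWT r WD lrs])
  have pp: "p_poly k r r00 x t = poly P t" for t
  proof -
    have dr: "dim_row r = n" using r by simp
    have "p_poly k r r00 x t = (r00 + t) * sigma k (r + t \<cdot>\<^sub>m 1\<^sub>m n) - x \<bullet> (newton_T (k - 1) (r + t \<cdot>\<^sub>m 1\<^sub>m n) *\<^sub>v x)"
      unfolding p_poly_def Let_def dr ..
    also have "\<dots> = (r00 + t) * poly \<sigma> t - (\<Sum>j<n. w j * poly (ep (k - 1) (rem j rs)) t)"
      unfolding sig newton_shift[OF W WTW WWT r WD lrs x] w_def ..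
    also have "\<dots> = poly P t" unfolding P_def \<sigma>_def lrs by (simp add: poly_sum algebra_simps)
    finally show ?thesis .
  qed
  define \<alpha> where "\<alpha> = sorted_list_of_multiset (proots P)"
  define \<beta> where "\<beta> = sorted_list_of_multiset (proots \<sigma>)"
  have ma: "mset \<alpha> = proots P" unfolding \<alpha>_def by simp
  have mb: "mset \<beta> = proots \<sigma>" unfolding \<beta>_def by simp
  have sa: "sorted \<alpha>" unfolding \<alpha>_def by simp
  have sb: "sorted \<beta>" unfolding \<beta>_def by simp
  have la: "length \<alpha> = Suc k" using ma rrP dP ds unfolding rr_def by (metis size_mset)
  have lb: "length \<beta> = k" using mb rrs ds unfolding rr_def by (metis size_mset)
  have fa: "poly P t = lead_coeff P * (\<Prod>i<k + 1. t - \<alpha> ! i)" for t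
  proof -
    have "poly P t = lead_coeff P * (\<Prod>a\<in>#proots P. t - a)"
      by (subst rr_factor[OF rrP]) (simp add: poly_prod_lin)
    also have "(\<Prod>a\<in>#proots P. t - a) = (\<Prod>i<length \<alpha>. t - \<alpha> ! i)" by (rule prod_proots_list[OF ma])
    finally show ?thesis using la by simp
  qed
  have fb: "poly \<sigma> t = lead_coeff \<sigma> * (\<Prod>i<k. t - \<beta> ! i)" for t
  proof -
    have "poly \<sigma> t = lead_coeff \<sigma> * (\<Prod>a\<in>#proots \<sigma>. t - a)"
      by (subst rr_factor[OF rrs]) (simp add: poly_prod_lin)
    also have "(\<Prod>a\<in>#proots \<sigma>. t - a) = (\<Prod>i<length \<beta>. t - \<beta> ! i)" by (rule prod_proots_list[OF mb])
    finally show ?thesis using lb by simp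
  qed
  have il: "\<alpha> ! i \<le> \<beta> ! i \<and> \<beta> ! i \<le> \<alpha> ! (i + 1)" if i: "i < k" for i
  proof (rule interlace_lists[OF sa sb la lb _ _ i])
    fix y
    have "Nle \<sigma> y \<le> Nle P y" "Nle P y \<le> Suc (Nle \<sigma> y)" using IPs by (auto simp: intl_def)
    then show "card {i. i < k \<and> \<beta> ! i \<le> y} \<le> card {i. i < Suc k \<and> \<alpha> ! i \<le> y}"
      "card {i. i < Suc k \<and> \<alpha> ! i \<le> y} \<le> Suc (card {i. i < k \<and> \<beta> ! i \<le> y})"
      using Nle_list[OF ma, of y] Nle_list[OF mb, of y] la lb by auto
  qed
  have rsne: "rs \<noteq> []" using lrs kn k1 by auto
  have rng: "Min (uminus ` set rs) \<le> \<beta> ! i \<and> \<beta> ! i \<le> Max (uminus ` set rs)" if "i < k" for i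
  proof -
    have "\<beta> ! i \<in># proots \<sigma>" using that lb mb by (metis nth_mem set_mset_mset)
    then show ?thesis using ep_range[of k rs] kn lrs rsne unfolding \<sigma>_def by auto
  qed
  show ?thesis
  proof (intro exI conjI allI impI)
    show "length \<alpha> = k + 1" using la by simp
    show "sorted \<alpha>" by fact
    show "lead_coeff P \<noteq> 0" using lP by linarith
    show "p_poly k r r00 x t = lead_coeff P * (\<Prod>i<k + 1. t - \<alpha> ! i)" for t using pp fa by simp
    show "length \<beta> = k" by fact
    show "sorted \<beta>" by fact
    show "lead_coeff \<sigma> \<noteq> 0" using ls by linarith
    show "sigma k (r + t \<cdot>\<^sub>m 1\<^sub>m n) = lead_coeff \<sigma> * (\<Prod>i<k. t - \<beta> ! i)" for t using sig fb by simp
    show "\<alpha> ! i \<le> \<beta> ! i" if "i < k" for i using il[OF that] by simp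
    show "\<beta> ! i \<le> \<alpha> ! (i + 1)" if "i < k" for i using il[OF that] by simp
    fix i assume i: "2 \<le> i \<and> i \<le> k - 1"
    have i1: "i - 2 < k" "i - 1 < k" using i k1 by auto
    have "\<beta> ! (i - 2) \<le> \<alpha> ! (i - 2 + 1)" using il[OF i1(1)] by simp
    moreover have "i - 2 + 1 = i - 1" using i by linarith
    ultimately show "Min (uminus ` set rs) \<le> \<alpha> ! (i - 1)" using rng[OF i1(1)] by simp
    show "\<alpha> ! (i - 1) \<le> Max (uminus ` set rs)" using il[OF i1(2)] rng[OF i1(2)] by simp
  qed
qed


end
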